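(* $\mathrm{Aut}_*(H)$ is a normal subgroup of $\mathrm{Aut}_c(H)$, and $\mathrm{Aut}_c(H)$ is the internal semidirect product of $\mathrm{Aut}_*(H)$ and $\mathrm{Aut}_c^{gr}(H)$. Consequently, $\mathrm{Aut}_0(H)$ is the internal semidirect product of $\mathrm{Aut}_*(H)$ and $\mathrm{Aut}_0^{gr}(H)$.
   Context: Let $k$ be a field and $0\neq q\in k$ not a root of unity. $H=k_q[x,x^{-1},y]$ is the $k$-algebra generated by $x,x^{-1},y$ with $xx^{-1}=x^{-1}x=1$, $yx=qxy$, a Hopf algebra with $\Delta(x)=x\otimes x$, $\Delta(x^{-1})=x^{-1}\otimes x^{-1}$, $\Delta(y)=y\otimes x+1\otimes y$, $\varepsilon(x)=1$, $\varepsilon(y)=0$; $\{x^ny^m:n\in\mathbb{Z},m\in\mathbb{N}\}$ is a $k$-basis. $H_0=\mathrm{span}\{x^n\}$, $H(m)=H_0y^m$. $\mathrm{Aut}_c(H)$ is the group under composition of coalgebra automorphisms of $H$; $\mathrm{Aut}_0(H)=\{\phi\in\mathrm{Aut}_c(H):\phi(1)=1\}$; $\mathrm{Aut}_c^{gr}(H)=\{\phi\in\mathrm{Aut}_c(H):\phi(H(m))\subseteq H(m)\ \forall m\ge0\}$; $\mathrm{Aut}_0^{gr}(H)=\mathrm{Aut}_c^{gr}(H)\cap\mathrm{Aut}_0(H)$; $\mathrm{Aut}_*(H)$ is the set of $\phi\in\mathrm{Aut}_0(H)$ such that for each $n\in\mathbb{Z}$ there is $\beta_n\in k$ with $\phi(x^ny)=x^ny+\beta_n(x^{n+1}-x^n)$.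 *)

theory Defs
  imports "HOL-Algebra.Coset" "HOL-Library.FuncSet"
begin

text \<open>Model of H = k_q[x,x^-1,y]: an element is a finitely supported coefficient
function on the basis x^n y^m, indexed by (n,m) :: int \<times> nat.
Elements of H \<otimes> H are finitely supported functions on pairs of basis indices.\<close>

type_synonym 'k hel = "int \<times> nat \<Rightarrow> 'k"
type_synonym 'k htens = "(int \<times> nat) \<times> (int \<times> nat) \<Rightarrow> 'k"

definition supp :: "('a \<Rightarrow> 'k::zero) \<Rightarrow> 'a set" where
  "supp f = {b. f b \<noteq> 0}"

definition Hsp :: "'k::field hel set" where
  "Hsp = {f. finite (supp f)}"

definition bas :: "'a \<Rightarrow> 'a \<Rightarrow> 'k::field" where
  "bas b = (\<lambda>c. if c = b then 1 else 0)"

text \<open>Product of basis elements in H: (x^a y^b)(x^e y^f) = q^(b e) x^(a+e) y^(b+f),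
 from yx = qxy (and y x^-1 = q^-1 x^-1 y).\<close>
fun hmul_basis :: "'k::field \<Rightarrow> int \<times> nat \<Rightarrow> int \<times> nat \<Rightarrow> 'k \<times> (int \<times> nat)" where
  "hmul_basis q (a, b) (e, f) = (q powi (int b * e), (a + e, b + f))"

definition tmul :: "'k::field \<Rightarrow> 'k htens \<Rightarrow> 'k htens \<Rightarrow> 'k htens" where
  "tmul q s t = (\<lambda>p. \<Sum>(u, v) \<in> supp s \<times> supp t.
      s u * t v *
      (let (c1, r1) = hmul_basis q (fst u) (fst v);
           (c2, r2) = hmul_basis q (snd u) (snd v)
       in if (r1, r2) = p then c1 * c2 else 0))"

primrec tpow :: "'k::field \<Rightarrow> 'k htens \<Rightarrow> nat \<Rightarrow> 'k htens" where
  "tpow q t 0 = bas ((0, 0), (0, 0))"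
| "tpow q t (Suc m) = tmul q (tpow q t m) t"

definition Delta_y :: "'k::field htens" where
  "Delta_y = (\<lambda>p. bas ((0, 1), (1, 0)) p + bas ((0, 0), (0, 1)) p)"

text \<open>\<Delta>(x^n y^m) = \<Delta>(x)^n \<Delta>(y)^m = (x^n \<otimes> x^n) (y \<otimes> x + 1 \<otimes> y)^m, as \<Delta> is an algebra map.\<close>
fun Delta_basis :: "'k::field \<Rightarrow> int \<times> nat \<Rightarrow> 'k htens" where
  "Delta_basis q (n, m) = tmul q (bas ((n, 0), (n, 0))) (tpow q Delta_y m)"

definition Delta :: "'k::field \<Rightarrow> 'k hel \<Rightarrow> 'k htens" where
  "Delta q h = (\<lambda>p. \<Sum>b \<in> supp h. h b * Delta_basis q b p)"

definition eps :: "'k::field hel \<Rightarrow> 'k" where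
  "eps h = (\<Sum>b \<in> supp h. h b * (if snd b = 0 then 1 else 0))"

definition tmap :: "('k::field hel \<Rightarrow> 'k hel) \<Rightarrow> 'k htens \<Rightarrow> 'k htens" where
  "tmap \<phi> t = (\<lambda>p. \<Sum>u \<in> supp t. t u * \<phi> (bas (fst u)) (fst p) * \<phi> (bas (snd u)) (snd p))"

definition klinear :: "('k::field hel \<Rightarrow> 'k hel) \<Rightarrow> bool" where
  "klinear \<phi> \<longleftrightarrow> (\<forall>f\<in>Hsp. \<forall>g\<in>Hsp. \<phi> (\<lambda>b. f b + g b) = (\<lambda>b. \<phi> f b + \<phi> g b))
                 \<and> (\<forall>c. \<forall>f\<in>Hsp. \<phi> (\<lambda>b. c * f b) = (\<lambda>b. c * \<phi> f b))"

definition coalg_aut :: "'k::field \<Rightarrow> ('k hel \<Rightarrow> 'k hel) \<Rightarrow> bool" where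
  "coalg_aut q \<phi> \<longleftrightarrow> bij_betw \<phi> Hsp Hsp \<and> klinear \<phi>
      \<and> (\<forall>h\<in>Hsp. Delta q (\<phi> h) = tmap \<phi> (Delta q h))
      \<and> (\<forall>h\<in>Hsp. eps (\<phi> h) = eps h)"

definition Autc :: "'k::field \<Rightarrow> ('k hel \<Rightarrow> 'k hel) set" where
  "Autc q = {\<phi>. coalg_aut q \<phi> \<and> \<phi> \<in> extensional Hsp}"

definition AutcG :: "'k::field \<Rightarrow> ('k hel \<Rightarrow> 'k hel) monoid" where
  "AutcG q = \<lparr>carrier = Autc q, mult = (\<lambda>\<phi> \<psi>. compose Hsp \<phi> \<psi>), one = restrict id Hsp\<rparr>"

definition Aut0 :: "'k::field \<Rightarrow> ('k hel \<Rightarrow> 'k hel) set" where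
  "Aut0 q = {\<phi> \<in> Autc q. \<phi> (bas (0, 0)) = bas (0, 0)}"

definition Aut0G :: "'k::field \<Rightarrow> ('k hel \<Rightarrow> 'k hel) monoid" where
  "Aut0G q = \<lparr>carrier = Aut0 q, mult = (\<lambda>\<phi> \<psi>. compose Hsp \<phi> \<psi>), one = restrict id Hsp\<rparr>"

definition Hm :: "nat \<Rightarrow> 'k::field hel set" where
  "Hm m = {h \<in> Hsp. \<forall>b \<in> supp h. snd b = m}"

definition Autgr :: "'k::field \<Rightarrow> ('k hel \<Rightarrow> 'k hel) set" where
  "Autgr q = {\<phi> \<in> Autc q. \<forall>m. \<phi> ` Hm m \<subseteq> Hm m}"

definition Aut0gr :: "'k::field \<Rightarrow> ('k hel \<Rightarrow> 'k hel) set" where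
  "Aut0gr q = Autgr q \<inter> Aut0 q"

definition Autstar :: "'k::field \<Rightarrow> ('k hel \<Rightarrow> 'k hel) set" where
  "Autstar q = {\<phi> \<in> Aut0 q. \<forall>n::int. \<exists>\<beta>.
      \<phi> (bas (n, 1)) = (\<lambda>c. bas (n, 1) c + \<beta> * (bas (n + 1, 0) c - bas (n, 0) c))}"

end

theory Submission
  imports Defs
begin


lemma supp_iff: "b \<in> supp f \<longleftrightarrow> f b \<noteq> 0" by (simp add: supp_def)

lemma supp_bas[simp]: "supp (bas b :: 'a \<Rightarrow> 'k::field) = {b}"
  by (auto simp: supp_def bas_def)

lemma bas_Hsp[simp]: "bas b \<in> Hsp" by (simp add: Hsp_def)

lemma Hsp_subset: "finite S \<Longrightarrow> (\<And>b. b \<notin> S \<Longrightarrow> f b = 0) \<Longrightarrow> f \<in> Hsp"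
  unfolding Hsp_def mem_Collect_eq by (rule finite_subset[of _ S]) (auto simp: supp_def)

lemma Hsp_add: "f \<in> Hsp \<Longrightarrow> g \<in> Hsp \<Longrightarrow> (\<lambda>b. f b + g b) \<in> Hsp"
  unfolding Hsp_def mem_Collect_eq by (rule finite_subset[of _ "supp f \<union> supp g"]) (auto simp: supp_def)

lemma Hsp_smult: "f \<in> Hsp \<Longrightarrow> (\<lambda>b. c * f b) \<in> Hsp"
  unfolding Hsp_def mem_Collect_eq by (rule finite_subset[of _ "supp f"]) (auto simp: supp_def)

lemma Hsp_zero: "(\<lambda>b. 0) \<in> Hsp" by (simp add: Hsp_def supp_def)

lemma sum_supp_single:
  fixes s :: "'a \<Rightarrow> 'k::field"
  assumes "finite S" "supp s \<subseteq> S"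
  shows "(\<Sum>u\<in>S. s u * (if u = u0 then c else 0)) = s u0 * c"
proof -
  have "(\<Sum>u\<in>S. s u * (if u = u0 then c else 0)) = (\<Sum>u\<in>S. if u = u0 then s u * c else 0)"
    by (rule sum.cong) auto
  also have "\<dots> = (if u0 \<in> S then s u0 * c else 0)" using assms(1) by simp
  also have "\<dots> = s u0 * c" using assms(2) by (auto simp: supp_def)
  finally show ?thesis .
qed

lemma sum_single_gen:
  fixes f :: "'a \<Rightarrow> 'k::field"
  assumes "finite S" "\<And>u. u \<in> S \<Longrightarrow> u \<noteq> u0 \<Longrightarrow> f u = 0"
  shows "(\<Sum>u\<in>S. f u) = (if u0 \<in> S then f u0 else 0)"
proof -
  have "(\<Sum>u\<in>S. f u) = (\<Sum>u\<in>S. if u = u0 then f u else 0)"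
    by (rule sum.cong) (auto simp: assms(2))
  also have "\<dots> = (if u0 \<in> S then f u0 else 0)" using assms(1) by simp
  finally show ?thesis .
qed

lemma klinear_add: "klinear \<phi> \<Longrightarrow> f \<in> Hsp \<Longrightarrow> g \<in> Hsp \<Longrightarrow> \<phi> (\<lambda>b. f b + g b) = (\<lambda>b. \<phi> f b + \<phi> g b)"
  unfolding klinear_def by blast

lemma klinear_smult: "klinear \<phi> \<Longrightarrow> f \<in> Hsp \<Longrightarrow> \<phi> (\<lambda>b. c * f b) = (\<lambda>b. c * \<phi> f b)"
  unfolding klinear_def by blast

lemma klinear_zero: "klinear \<phi> \<Longrightarrow> \<phi> (\<lambda>b. 0) = (\<lambda>b. 0)"
proof -
  assume "klinear \<phi>"
  then have "\<phi> (\<lambda>b. 0 * bas (0::int,0::nat) b) = (\<lambda>b. 0 * \<phi> (bas (0,0)) b)"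
    using klinear_smult bas_Hsp by blast
  then show ?thesis by simp
qed

lemma finite_sum_Hsp: "finite S \<Longrightarrow> (\<lambda>p. \<Sum>b\<in>S. c b * bas b p) \<in> Hsp"
  by (rule Hsp_subset[of S]) (auto simp: bas_def intro!: sum.neutral)

lemma klinear_sum:
  assumes "klinear \<phi>" "finite S"
  shows "\<phi> (\<lambda>p. \<Sum>b\<in>S. c b * bas b p) = (\<lambda>p. \<Sum>b\<in>S. c b * \<phi> (bas b) p)"
  using assms(2)
proof (induction S)
  case empty thus ?case using klinear_zero[OF assms(1)] by simp
next
  case (insert x S)
  have "\<phi> (\<lambda>p. \<Sum>b\<in>insert x S. c b * bas b p)
      = \<phi> (\<lambda>p. (\<lambda>p. c x * bas x p) p + (\<lambda>p. \<Sum>b\<in>S. c b * bas b p) p)"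
    using insert by simp
  also have "\<dots> = (\<lambda>p. \<phi> (\<lambda>p. c x * bas x p) p + \<phi> (\<lambda>p. \<Sum>b\<in>S. c b * bas b p) p)"
    by (rule klinear_add[OF assms(1) Hsp_smult[OF bas_Hsp] finite_sum_Hsp[OF insert(1)]])
  also have "\<dots> = (\<lambda>p. c x * \<phi> (bas x) p + (\<Sum>b\<in>S. c b * \<phi> (bas b) p))"
    using klinear_smult[OF assms(1) bas_Hsp] insert.IH by simp
  also have "\<dots> = (\<lambda>p. \<Sum>b\<in>insert x S. c b * \<phi> (bas b) p)"
    using insert by simp
  finally show ?case .
qed

lemma expand:
  fixes h :: "'a \<Rightarrow> 'k::field"
  assumes "finite S" "supp h \<subseteq> S"
  shows "h = (\<lambda>p. \<Sum>b\<in>S. h b * bas b p)"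
proof
  fix p
  have "(\<Sum>b\<in>S. h b * bas b p) = (\<Sum>b\<in>S. h b * (if b = p then 1 else 0))"
    by (rule sum.cong) (auto simp: bas_def)
  also have "\<dots> = h p" using sum_supp_single[OF assms] by simp
  finally show "h p = (\<Sum>b\<in>S. h b * bas b p)" by simp
qed

lemma lin_expand:
  assumes "klinear \<phi>" "h \<in> Hsp" "finite S" "supp h \<subseteq> S"
  shows "\<phi> h p = (\<Sum>b\<in>S. h b * \<phi> (bas b) p)"
proof -
  have "\<phi> h = \<phi> (\<lambda>p. \<Sum>b\<in>S. h b * bas b p)" using expand[OF assms(3,4)] by simp
  also have "\<dots> = (\<lambda>p. \<Sum>b\<in>S. h b * \<phi> (bas b) p)" by (rule klinear_sum[OF assms(1,3)])
  finally show ?thesis by simp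
qed

lemma lin_expand_supp:
  assumes "klinear \<phi>" "h \<in> Hsp"
  shows "\<phi> h p = (\<Sum>b\<in>supp h. h b * \<phi> (bas b) p)"
  using lin_expand[OF assms] assms(2) by (simp add: Hsp_def)



primrec qb :: "'k::field \<Rightarrow> nat \<Rightarrow> nat \<Rightarrow> 'k" where
  "qb q 0 i = (if i = 0 then 1 else 0)"
| "qb q (Suc m) i = (if 0 < i then qb q m (i - 1) * q ^ (Suc m - i) else 0)
                    + (if i \<le> m then qb q m i else 0)"

lemma supp_Dy: "supp (Delta_y :: 'k::field htens) = {((0,1),(1,0)), ((0,0),(0,1))}"
  by (auto simp: supp_def Delta_y_def bas_def)

lemma tmul_Dy_e1:
  fixes s :: "'k::field htens"
  shows "s u * Delta_y ((0,1),(1,0)) * (let (c1, r1) = hmul_basis q (fst u) (fst ((0::int,1::nat),(1::int,0::nat)));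
           (c2, r2) = hmul_basis q (snd u) (snd ((0::int,1::nat),(1::int,0::nat)))
       in if (r1, r2) = ((a,i),(b,j)) then c1 * c2 else 0)
    = (if 0 < i then s u * (if u = ((a,i-1),(b-1,j)) then q ^ j else 0) else 0)"
  by (cases u) (auto simp: Delta_y_def bas_def Let_def split: if_splits)

lemma tmul_Dy_e2:
  fixes s :: "'k::field htens"
  shows "s u * Delta_y ((0,0),(0,1)) * (let (c1, r1) = hmul_basis q (fst u) (fst ((0::int,0::nat),(0::int,1::nat)));
           (c2, r2) = hmul_basis q (snd u) (snd ((0::int,0::nat),(0::int,1::nat)))
       in if (r1, r2) = ((a,i),(b,j)) then c1 * c2 else 0)
    = (if 0 < j then s u * (if u = ((a,i),(b,j-1)) then 1 else 0) else 0)"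
  by (cases u) (auto simp: Delta_y_def bas_def Let_def split: if_splits)

lemma tmul_Dy:
  fixes s :: "'k::field htens"
  assumes "finite (supp s)"
  shows "tmul q s Delta_y ((a,i),(b,j)) = (if 0 < i then s ((a,i-1),(b-1,j)) * q ^ j else 0)
                                      + (if 0 < j then s ((a,i),(b,j-1)) else 0)"
proof -
  have ne: "((0::int,1::nat),(1::int,0::nat)) \<noteq> ((0,0),(0,1))" by simp
  have "tmul q s Delta_y ((a,i),(b,j)) = (\<Sum>u\<in>supp s.
     (if 0 < i then s u * (if u = ((a,i-1),(b-1,j)) then q ^ j else 0) else 0)
   + (if 0 < j then s u * (if u = ((a,i),(b,j-1)) then 1 else 0) else 0))"
    unfolding tmul_def sum.cartesian_product[symmetric] supp_Dy
    by (simp only: sum.insert[OF finite.insertI[OF finite.emptyI]] sum.empty insert_iff empty_iff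
          ne simp_thms sum.insert[OF finite.emptyI] tmul_Dy_e1 tmul_Dy_e2 add_0_right)
  also have "\<dots> = (if 0 < i then s ((a,i-1),(b-1,j)) * q ^ j else 0)
                                      + (if 0 < j then s ((a,i),(b,j-1)) else 0)"
    by (simp add: sum.distrib sum_supp_single[OF assms] sum.If_cases)
  finally show ?thesis .
qed

lemma tpow_formula:
  "tpow q Delta_y m ((a,i),(b,j)) = (if a = 0 \<and> b = int i \<and> i + j = m then qb q m i else 0)"
proof (induction m arbitrary: a i b j)
  case 0
  then show ?case by (auto simp: bas_def)
next
  case (Suc m)
  have fin: "finite (supp (tpow q Delta_y m))"
  proof (rule finite_subset)
    show "supp (tpow q Delta_y m) \<subseteq> (\<lambda>i. ((0,i),(int i, m-i))) ` {..m}"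
      by (auto simp: supp_def Suc.IH split: if_splits)
  qed simp
  show ?case
    unfolding tpow.simps tmul_Dy[OF fin] Suc.IH
    by (cases i; cases j) auto
qed

lemma finite_supp_tpow: "finite (supp (tpow q Delta_y m))"
proof (rule finite_subset)
  show "supp (tpow q Delta_y m) \<subseteq> (\<lambda>i. ((0,i),(int i, m-i))) ` {..m}"
    by (auto simp: supp_def tpow_formula split: if_splits)
qed simp

lemma sum_one_elem: "(\<Sum>x\<in>{y}. f x) = f y" by simp

lemma tmul_bas_left:
  fixes t :: "'k::field htens"
  assumes "finite (supp t)"
  shows "tmul q (bas ((n,0),(n,0))) t ((a,i),(b,j)) = t ((a-n,i),(b-n,j))"
proof -
  have "tmul q (bas ((n,0),(n,0))) t ((a,i),(b,j))
     = (\<Sum>v\<in>supp t. t v * (if v = ((a-n,i),(b-n,j)) then 1 else 0))"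
    unfolding tmul_def sum.cartesian_product[symmetric] supp_bas
    apply (simp only: sum_one_elem)
    apply (rule sum.cong, simp)
    subgoal for v by (cases v) (auto simp: bas_def Let_def split: if_splits)
    done
  also have "\<dots> = t ((a-n,i),(b-n,j))" using sum_supp_single[OF assms subset_refl] by simp
  finally show ?thesis .
qed

lemma DB_formula:
  "Delta_basis q (n,m) ((a,i),(b,j)) = (if a = n \<and> b = n + int i \<and> i + j = m then qb q m i else 0)"
  by (simp add: tmul_bas_left[OF finite_supp_tpow] tpow_formula)



declare Delta_basis.simps[simp del]

lemma Delta_formula:
  fixes h :: "'k::field hel"
  assumes "h \<in> Hsp"
  shows "Delta q h ((a,i),(b,j)) = (if b = a + int i then qb q (i+j) i * h (a, i+j) else 0)"
proof -
  have fin: "finite (supp h)" using assms by (simp add: Hsp_def)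
  have "Delta q h ((a,i),(b,j)) = (\<Sum>c\<in>supp h. h c * (if c = (a, i+j) then (if b = a + int i then qb q (i+j) i else 0) else 0))"
    unfolding Delta_def
    apply (rule sum.cong, simp)
    subgoal for c by (cases c) (auto simp: DB_formula)
    done
  also have "\<dots> = (if b = a + int i then qb q (i+j) i * h (a, i+j) else 0)"
    using sum_supp_single[OF fin subset_refl] by simp
  finally show ?thesis .
qed

lemma Delta_bas: "Delta q (bas c) = Delta_basis q c"
  unfolding Delta_def supp_bas by (simp add: bas_def)

lemma finite_supp_Delta:
  assumes "h \<in> Hsp"
  shows "finite (supp (Delta q h))"
proof (rule finite_subset)
  have fin: "finite (supp h)" using assms by (simp add: Hsp_def)
  show "supp (Delta q h) \<subseteq> (\<lambda>((a,m),i). ((a,i),(a + int i, m - i))) ` (supp h \<times> {..Max (snd ` supp h)})"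
  proof
    fix p assume p: "p \<in> supp (Delta q h)"
    obtain a i b j where pe: "p = ((a,i),(b,j))" by (metis prod.collapse)
    have nz: "Delta q h ((a,i),(b,j)) \<noteq> 0" using p pe by (simp add: supp_def)
    hence b: "b = a + int i" and hs: "(a, i+j) \<in> supp h"
      by (auto simp: Delta_formula[OF assms] supp_def split: if_splits)
    have "i + j \<le> Max (snd ` supp h)" using hs fin by (metis Max_ge finite_imageI image_eqI snd_conv)
    then show "p \<in> (\<lambda>((a,m),i). ((a,i),(a + int i, m - i))) ` (supp h \<times> {..Max (snd ` supp h)})"
      using hs b pe by (auto intro!: image_eqI[where x="((a,i+j),i)"])
  qed
  show "finite ((\<lambda>((a,m),i). ((a,i),(a + int i, m - i))) ` (supp h \<times> {..Max (snd ` supp h)}))"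
    using fin by simp
qed

lemma eps_super:
  assumes "finite S" "supp h \<subseteq> S"
  shows "eps h = (\<Sum>b\<in>S. h b * (if snd b = 0 then 1 else 0))"
  unfolding eps_def
  by (rule sum.mono_neutral_left[OF assms(1,2)]) (auto simp: supp_def)

lemma eps_bas: "eps (bas (n,m) :: 'k::field hel) = (if m = 0 then 1 else 0)"
  unfolding eps_def supp_bas by (simp add: bas_def)

lemma qb_0[simp]: "qb q m 0 = 1"
  by (induction m) auto

lemma qb_gt: "m < i \<Longrightarrow> qb q m i = 0"
  by (induction m arbitrary: i) auto

lemma qb_diag[simp]: "qb q m m = 1"
  by (induction m) (auto simp: qb_gt)

lemma qb_1: "qb q m 1 * (q - 1) = q ^ m - 1"
proof (induction m)
  case 0 then show ?case by simp
next
  case (Suc m)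
  have "qb q (Suc m) 1 = q ^ m + qb q m 1"
    by (cases m) (auto simp: qb_gt)
  then show ?case using Suc by (simp add: algebra_simps)
qed

lemma qb_1_nz:
  fixes q :: "'k::field"
  assumes "\<forall>n::nat. n > 0 \<longrightarrow> q ^ n \<noteq> 1" "0 < m"
  shows "qb q m 1 \<noteq> 0"
proof
  assume "qb q m 1 = 0"
  then have "q ^ m - 1 = 0" using qb_1[of q m] by simp
  then show False using assms by simp
qed

lemma tmap_super:
  assumes "finite A" "supp t \<subseteq> A"
  shows "tmap \<phi> t p = (\<Sum>u\<in>A. t u * \<phi> (bas (fst u)) (fst p) * \<phi> (bas (snd u)) (snd p))"
  unfolding tmap_def
  by (rule sum.mono_neutral_left[OF assms(1,2)]) (auto simp: supp_def)

lemma tmap_bas: "tmap \<phi> (bas u) p = \<phi> (bas (fst u)) (fst p) * \<phi> (bas (snd u)) (snd p)"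
  unfolding tmap_def supp_bas by (simp add: bas_def)

lemma DB0: "Delta_basis q (n,0) = bas ((n,0),(n,0))"
  by (rule ext) (auto simp: DB_formula bas_def split: if_splits)

lemma DB1: "Delta_basis q (n,1) = (\<lambda>p. bas ((n,1),(n+1,0)) p + bas ((n,0),(n,1)) p)"
proof (rule ext)
  fix p :: "(int \<times> nat) \<times> int \<times> nat"
  obtain a i b j where pe: "p = ((a,i),(b,j))" by (metis prod.collapse)
  show "Delta_basis q (n,1) p = bas ((n,1),(n+1,0)) p + bas ((n,0),(n,1)) p"
    unfolding pe DB_formula by (cases i) (auto simp: bas_def)
qed



lemma autcD:
  assumes "\<phi> \<in> Autc q"
  shows "bij_betw \<phi> Hsp Hsp" "klinear \<phi>" "\<And>h. h \<in> Hsp \<Longrightarrow> Delta q (\<phi> h) = tmap \<phi> (Delta q h)"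
    "\<And>h. h \<in> Hsp \<Longrightarrow> eps (\<phi> h) = eps h" "\<phi> \<in> extensional Hsp"
  using assms by (auto simp: Autc_def coalg_aut_def)

lemma autc_Hsp: "\<phi> \<in> Autc q \<Longrightarrow> h \<in> Hsp \<Longrightarrow> \<phi> h \<in> Hsp"
  using autcD(1) bij_betwE by blast

lemma autc_inj: "\<phi> \<in> Autc q \<Longrightarrow> g \<in> Hsp \<Longrightarrow> h \<in> Hsp \<Longrightarrow> \<phi> g = \<phi> h \<Longrightarrow> g = h"
  using autcD(1) by (metis bij_betw_imp_inj_on inj_onD)

lemma autcI:
  assumes "bij_betw \<phi> Hsp Hsp" "klinear \<phi>" "\<And>h. h \<in> Hsp \<Longrightarrow> Delta q (\<phi> h) = tmap \<phi> (Delta q h)"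
    "\<And>h. h \<in> Hsp \<Longrightarrow> eps (\<phi> h) = eps h" "\<phi> \<in> extensional Hsp"
  shows "\<phi> \<in> Autc q"
  using assms by (auto simp: Autc_def coalg_aut_def)

lemma tmap_cong: "(\<And>b. f (bas b) = g (bas b)) \<Longrightarrow> tmap f t = tmap g t"
  unfolding tmap_def by simp

lemma tmap_compose:
  assumes lin: "klinear \<phi>" and psiH: "\<And>b. \<psi> (bas b) \<in> Hsp" and fin: "finite (supp t)"
  shows "tmap \<phi> (tmap \<psi> t) = tmap (\<lambda>h. \<phi> (\<psi> h)) t"
proof (rule ext)
  fix p :: "(int \<times> nat) \<times> (int \<times> nat)"
  define S1 where "S1 = (\<Union>u\<in>supp t. supp (\<psi> (bas (fst u))))"
  define S2 where "S2 = (\<Union>u\<in>supp t. supp (\<psi> (bas (snd u))))"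
  have fS1: "finite S1" unfolding S1_def using fin psiH by (auto simp: Hsp_def)
  have fS2: "finite S2" unfolding S2_def using fin psiH by (auto simp: Hsp_def)
  have sub1: "\<And>u. u \<in> supp t \<Longrightarrow> supp (\<psi> (bas (fst u))) \<subseteq> S1" unfolding S1_def by auto
  have sub2: "\<And>u. u \<in> supp t \<Longrightarrow> supp (\<psi> (bas (snd u))) \<subseteq> S2" unfolding S2_def by auto
  have suppT: "supp (tmap \<psi> t) \<subseteq> S1 \<times> S2"
  proof
    fix v assume v: "v \<in> supp (tmap \<psi> t)"
    show "v \<in> S1 \<times> S2"
    proof (rule ccontr)
      assume nv: "v \<notin> S1 \<times> S2"
      have "tmap \<psi> t v = 0"
        unfolding tmap_def
      proof (rule sum.neutral, rule ballI)
        fix u assume u: "u \<in> supp t"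
        have "\<psi> (bas (fst u)) (fst v) = 0 \<or> \<psi> (bas (snd u)) (snd v) = 0"
          using nv sub1[OF u] sub2[OF u] by (cases v) (auto simp: supp_def)
        then show "t u * \<psi> (bas (fst u)) (fst v) * \<psi> (bas (snd u)) (snd v) = 0" by auto
      qed
      then show False using v by (simp add: supp_def)
    qed
  qed
  have "tmap \<phi> (tmap \<psi> t) p = (\<Sum>v\<in>S1 \<times> S2. tmap \<psi> t v * \<phi> (bas (fst v)) (fst p) * \<phi> (bas (snd v)) (snd p))"
    by (rule tmap_super[OF finite_cartesian_product[OF fS1 fS2] suppT])
  also have "\<dots> = (\<Sum>v\<in>S1 \<times> S2. \<Sum>u\<in>supp t. t u * \<psi> (bas (fst u)) (fst v) * \<psi> (bas (snd u)) (snd v)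
                     * \<phi> (bas (fst v)) (fst p) * \<phi> (bas (snd v)) (snd p))"
    unfolding tmap_def by (simp add: sum_distrib_right)
  also have "\<dots> = (\<Sum>u\<in>supp t. \<Sum>v\<in>S1 \<times> S2. t u * \<psi> (bas (fst u)) (fst v) * \<psi> (bas (snd u)) (snd v)
                     * \<phi> (bas (fst v)) (fst p) * \<phi> (bas (snd v)) (snd p))"
    by (rule sum.swap)
  also have "\<dots> = (\<Sum>u\<in>supp t. t u * \<phi> (\<psi> (bas (fst u))) (fst p) * \<phi> (\<psi> (bas (snd u))) (snd p))"
  proof (rule sum.cong[OF refl])
    fix u assume u: "u \<in> supp t"
    have e1: "\<phi> (\<psi> (bas (fst u))) (fst p) = (\<Sum>v1\<in>S1. \<psi> (bas (fst u)) v1 * \<phi> (bas v1) (fst p))"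
      by (rule lin_expand[OF lin psiH fS1 sub1[OF u]])
    have e2: "\<phi> (\<psi> (bas (snd u))) (snd p) = (\<Sum>v2\<in>S2. \<psi> (bas (snd u)) v2 * \<phi> (bas v2) (snd p))"
      by (rule lin_expand[OF lin psiH fS2 sub2[OF u]])
    have "t u * \<phi> (\<psi> (bas (fst u))) (fst p) * \<phi> (\<psi> (bas (snd u))) (snd p)
        = t u * ((\<Sum>v1\<in>S1. \<psi> (bas (fst u)) v1 * \<phi> (bas v1) (fst p)) * (\<Sum>v2\<in>S2. \<psi> (bas (snd u)) v2 * \<phi> (bas v2) (snd p)))"
      by (simp add: e1 e2 mult.assoc)
    also have "\<dots> = t u * (\<Sum>v1\<in>S1. \<Sum>v2\<in>S2. (\<psi> (bas (fst u)) v1 * \<phi> (bas v1) (fst p)) * (\<psi> (bas (snd u)) v2 * \<phi> (bas v2) (snd p)))"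
      by (simp add: sum_product)
    also have "\<dots> = (\<Sum>v\<in>S1 \<times> S2. t u * ((\<psi> (bas (fst u)) (fst v) * \<phi> (bas (fst v)) (fst p)) * (\<psi> (bas (snd u)) (snd v) * \<phi> (bas (snd v)) (snd p))))"
      by (simp add: sum.cartesian_product sum_distrib_left case_prod_beta)
    also have "\<dots> = (\<Sum>v\<in>S1 \<times> S2. t u * \<psi> (bas (fst u)) (fst v) * \<psi> (bas (snd u)) (snd v)
                     * \<phi> (bas (fst v)) (fst p) * \<phi> (bas (snd v)) (snd p))"
      by (rule sum.cong) (simp_all add: mult_ac)
    finally show "(\<Sum>v\<in>S1 \<times> S2. t u * \<psi> (bas (fst u)) (fst v) * \<psi> (bas (snd u)) (snd v)
                     * \<phi> (bas (fst v)) (fst p) * \<phi> (bas (snd v)) (snd p))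
        = t u * \<phi> (\<psi> (bas (fst u))) (fst p) * \<phi> (\<psi> (bas (snd u))) (snd p)" by simp
  qed
  also have "\<dots> = tmap (\<lambda>h. \<phi> (\<psi> h)) t p" unfolding tmap_def by simp
  finally show "tmap \<phi> (tmap \<psi> t) p = tmap (\<lambda>h. \<phi> (\<psi> h)) t p" .
qed

lemma tmap_id:
  assumes "finite (supp t)"
  shows "tmap (restrict id Hsp) t = t"
proof (rule ext)
  fix p
  have "tmap (restrict id Hsp) t p = (\<Sum>u\<in>supp t. t u * (if u = p then 1 else 0))"
    unfolding tmap_def
    apply (rule sum.cong, simp)
    apply (simp only: restrict_apply'[OF bas_Hsp] id_apply)
    apply (auto simp: bas_def prod_eq_iff)
    done
  also have "\<dots> = t p" using sum_supp_single[OF assms subset_refl] by simp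
  finally show "tmap (restrict id Hsp) t p = t p" .
qed



lemma compose_Autc:
  fixes q :: "'k::field"
  assumes f: "\<phi> \<in> Autc q" and g: "\<psi> \<in> Autc q"
  shows "compose Hsp \<phi> \<psi> \<in> Autc q"
proof (rule autcI)
  show "bij_betw (compose Hsp \<phi> \<psi>) Hsp Hsp"
    by (rule bij_betw_compose[OF autcD(1)[OF g] autcD(1)[OF f]])
  show "klinear (compose Hsp \<phi> \<psi>)"
    unfolding klinear_def
  proof (intro conjI ballI allI)
    fix a b :: "'k hel" assume a: "a \<in> Hsp" and b: "b \<in> Hsp"
    show "compose Hsp \<phi> \<psi> (\<lambda>x. a x + b x) = (\<lambda>x. compose Hsp \<phi> \<psi> a x + compose Hsp \<phi> \<psi> b x)"
      using a b Hsp_add[OF a b] autc_Hsp[OF g a] autc_Hsp[OF g b]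
      by (simp add: compose_eq klinear_add[OF autcD(2)[OF g]] klinear_add[OF autcD(2)[OF f]])
  next
    fix c and a :: "'k hel" assume a: "a \<in> Hsp"
    show "compose Hsp \<phi> \<psi> (\<lambda>x. c * a x) = (\<lambda>x. c * compose Hsp \<phi> \<psi> a x)"
      using a Hsp_smult[OF a] autc_Hsp[OF g a]
      by (simp add: compose_eq klinear_smult[OF autcD(2)[OF g]] klinear_smult[OF autcD(2)[OF f]])
  qed
  fix h :: "'k hel" assume h: "h \<in> Hsp"
  show "Delta q (compose Hsp \<phi> \<psi> h) = tmap (compose Hsp \<phi> \<psi>) (Delta q h)"
  proof -
    have "Delta q (compose Hsp \<phi> \<psi> h) = Delta q (\<phi> (\<psi> h))" using h by (simp add: compose_eq)
    also have "\<dots> = tmap \<phi> (tmap \<psi> (Delta q h))"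
      using autcD(3)[OF f autc_Hsp[OF g h]] autcD(3)[OF g h] by simp
    also have "\<dots> = tmap (\<lambda>x. \<phi> (\<psi> x)) (Delta q h)"
      by (rule tmap_compose[of \<phi> \<psi>, OF autcD(2)[OF f] autc_Hsp[OF g bas_Hsp] finite_supp_Delta[OF h]])
    also have "\<dots> = tmap (compose Hsp \<phi> \<psi>) (Delta q h)"
      by (rule tmap_cong) (simp add: compose_eq)
    finally show ?thesis .
  qed
  show "eps (compose Hsp \<phi> \<psi> h) = eps h"
    using h autcD(4)[OF f autc_Hsp[OF g h]] autcD(4)[OF g h] by (simp add: compose_eq)
qed simp

lemma one_Autc: "restrict id Hsp \<in> Autc q"
proof (rule autcI)
  show "bij_betw (restrict id Hsp) Hsp Hsp" by (simp add: bij_betw_id)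
  show "klinear (restrict id Hsp)" unfolding klinear_def by (simp add: Hsp_add Hsp_smult)
  fix h :: "'a hel" assume h: "h \<in> Hsp"
  show "Delta q (restrict id Hsp h) = tmap (restrict id Hsp) (Delta q h)"
    using h tmap_id[OF finite_supp_Delta[OF h]] by simp
  show "eps (restrict id Hsp h) = eps h" using h by simp
qed simp

lemma inv_Autc:
  fixes q :: "'k::field"
  assumes f: "\<phi> \<in> Autc q"
  defines "\<psi> \<equiv> restrict (inv_into Hsp \<phi>) Hsp"
  shows "\<psi> \<in> Autc q" and "compose Hsp \<psi> \<phi> = restrict id Hsp"
proof -
  have bij: "bij_betw \<phi> Hsp Hsp" by (rule autcD(1)[OF f])
  have bij2: "bij_betw \<psi> Hsp Hsp" unfolding \<psi>_def using bij_betw_inv_into[OF bij] by simp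
  have psiH: "\<And>h. h \<in> Hsp \<Longrightarrow> \<psi> h \<in> Hsp" using bij2 bij_betwE by blast
  have phipsi: "\<And>h. h \<in> Hsp \<Longrightarrow> \<phi> (\<psi> h) = h" unfolding \<psi>_def
    using bij by (simp add: bij_betw_def f_inv_into_f)
  have psiphi: "\<And>h. h \<in> Hsp \<Longrightarrow> \<psi> (\<phi> h) = h" unfolding \<psi>_def
    using bij autc_Hsp[OF f] by (simp add: bij_betw_def inv_into_f_f)
  have lin: "klinear \<phi>" by (rule autcD(2)[OF f])
  have linpsi: "klinear \<psi>"
    unfolding klinear_def
  proof (intro conjI ballI allI)
    fix a b :: "'k hel" assume a: "a \<in> Hsp" and b: "b \<in> Hsp"
    have "\<phi> (\<lambda>x. \<psi> a x + \<psi> b x) = (\<lambda>x. a x + b x)"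
      using klinear_add[OF lin psiH[OF a] psiH[OF b]] phipsi a b by simp
    then have "\<psi> (\<lambda>x. a x + b x) = \<psi> (\<phi> (\<lambda>x. \<psi> a x + \<psi> b x))" by simp
    also have "\<dots> = (\<lambda>x. \<psi> a x + \<psi> b x)" by (rule psiphi[OF Hsp_add[OF psiH[OF a] psiH[OF b]]])
    finally show "\<psi> (\<lambda>x. a x + b x) = (\<lambda>x. \<psi> a x + \<psi> b x)" .
  next
    fix c and a :: "'k hel" assume a: "a \<in> Hsp"
    have "\<phi> (\<lambda>x. c * \<psi> a x) = (\<lambda>x. c * a x)"
      using klinear_smult[OF lin psiH[OF a]] phipsi a by simp
    then have "\<psi> (\<lambda>x. c * a x) = \<psi> (\<phi> (\<lambda>x. c * \<psi> a x))" by simp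
    also have "\<dots> = (\<lambda>x. c * \<psi> a x)" by (rule psiphi[OF Hsp_smult[OF psiH[OF a]]])
    finally show "\<psi> (\<lambda>x. c * a x) = (\<lambda>x. c * \<psi> a x)" .
  qed
  show "\<psi> \<in> Autc q"
  proof (rule autcI[OF bij2 linpsi])
    fix h :: "'k hel" assume h: "h \<in> Hsp"
    have g: "\<psi> h \<in> Hsp" by (rule psiH[OF h])
    have "tmap \<psi> (Delta q h) = tmap \<psi> (Delta q (\<phi> (\<psi> h)))" using phipsi[OF h] by simp
    also have "\<dots> = tmap \<psi> (tmap \<phi> (Delta q (\<psi> h)))" using autcD(3)[OF f g] by simp
    also have "\<dots> = tmap (\<lambda>x. \<psi> (\<phi> x)) (Delta q (\<psi> h))"
      by (rule tmap_compose[of \<psi> \<phi>, OF linpsi autc_Hsp[OF f bas_Hsp] finite_supp_Delta[OF g, of q]])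
    also have "\<dots> = tmap (restrict id Hsp) (Delta q (\<psi> h))"
      by (rule tmap_cong) (simp add: psiphi)
    also have "\<dots> = Delta q (\<psi> h)" by (rule tmap_id[OF finite_supp_Delta[OF g]])
    finally show "Delta q (\<psi> h) = tmap \<psi> (Delta q h)" by simp
    show "eps (\<psi> h) = eps h" using autcD(4)[OF f g] phipsi[OF h] by simp
  qed (simp add: \<psi>_def)
  show "compose Hsp \<psi> \<phi> = restrict id Hsp"
    by (rule ext) (simp add: compose_def psiphi)
qed



lemma AutcG_simps[simp]: "carrier (AutcG q) = Autc q" "mult (AutcG q) = (\<lambda>\<phi> \<psi>. compose Hsp \<phi> \<psi>)"
  "one (AutcG q) = restrict id Hsp"
  unfolding AutcG_def by simp_all

lemma group_AutcG: "group (AutcG q)"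
proof (rule groupI)
  fix x y assume "x \<in> carrier (AutcG q)" "y \<in> carrier (AutcG q)"
  then show "x \<otimes>\<^bsub>AutcG q\<^esub> y \<in> carrier (AutcG q)"
    using compose_Autc by (metis AutcG_simps(1,2))
next
  show "\<one>\<^bsub>AutcG q\<^esub> \<in> carrier (AutcG q)" using one_Autc by (metis AutcG_simps(1,3))
next
  fix x y z assume "x \<in> carrier (AutcG q)" "y \<in> carrier (AutcG q)" "z \<in> carrier (AutcG q)"
  then have za: "z \<in> Autc q" by (metis AutcG_simps(1))
  have z: "z \<in> Hsp \<rightarrow> Hsp" using autc_Hsp[OF za] by blast
  show "x \<otimes>\<^bsub>AutcG q\<^esub> y \<otimes>\<^bsub>AutcG q\<^esub> z = x \<otimes>\<^bsub>AutcG q\<^esub> (y \<otimes>\<^bsub>AutcG q\<^esub> z)"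
    unfolding AutcG_simps by (rule compose_assoc[OF z, symmetric])
next
  fix x assume x: "x \<in> carrier (AutcG q)"
  then have xa: "x \<in> Autc q" by (metis AutcG_simps(1))
  show "\<one>\<^bsub>AutcG q\<^esub> \<otimes>\<^bsub>AutcG q\<^esub> x = x"
    unfolding AutcG_simps
    by (rule extensionalityI[OF compose_extensional autcD(5)[OF xa]]) (simp add: compose_eq autc_Hsp[OF xa])
next
  fix x assume x: "x \<in> carrier (AutcG q)"
  then have xa: "x \<in> Autc q" by (metis AutcG_simps(1))
  show "\<exists>y\<in>carrier (AutcG q). y \<otimes>\<^bsub>AutcG q\<^esub> x = \<one>\<^bsub>AutcG q\<^esub>"
    unfolding AutcG_simps using inv_Autc[OF xa] by blast
qed



lemma grouplike:
  fixes g :: "'k::field hel"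
  assumes g: "g \<in> Hsp" and D: "\<And>p. Delta q g p = g (fst p) * g (snd p)" and e: "eps g = 1"
  shows "\<exists>a. g = bas (a,0)"
proof -
  have hi: "g (c,m) = 0" if "0 < m" for c m
  proof -
    have "Delta q g ((c,m),(c,m)) = g (c,m) * g (c,m)" using D by simp
    moreover have "Delta q g ((c,m),(c,m)) = 0" using that by (simp add: Delta_formula[OF g])
    ultimately show ?thesis by simp
  qed
  have lo: "g (a,0) * g (b,0) = (if a = b then g (a,0) else 0)" for a b
    using D[of "((a,0),(b,0))"] by (simp add: Delta_formula[OF g] eq_commute)
  have "supp g \<noteq> {}"
  proof
    assume "supp g = {}" then show False using e by (simp add: eps_def)
  qed
  then obtain c where c: "c \<in> supp g" by blast
  obtain a m where cam: "c = (a,m)" by (cases c)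
  have m0: "m = 0" using c hi cam by (auto simp: supp_def)
  have ga: "g (a,0) \<noteq> 0" using c cam m0 by (simp add: supp_def)
  have ga1: "g (a,0) = 1" using lo[of a a] ga by (metis mult_cancel_left2 mult.commute)
  have "g = bas (a,0)"
  proof (rule ext)
    fix p :: "int \<times> nat"
    obtain b j where p: "p = (b,j)" by (cases p)
    show "g p = bas (a,0) p"
    proof (cases "j = 0")
      case True
      then show ?thesis using lo[of a b] ga1 p by (auto simp: bas_def split: if_splits)
    next
      case False
      then show ?thesis using hi[of j b] p by (simp add: bas_def)
    qed
  qed
  then show ?thesis by blast
qed

lemma skewprim:
  fixes u :: "'k::field hel"
  assumes qn: "\<forall>n::nat. n > 0 \<longrightarrow> q ^ n \<noteq> 1"
  assumes u: "u \<in> Hsp"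
    and D: "\<And>p. Delta q u p = u (fst p) * bas (s,0) (snd p) + bas (t,0) (fst p) * u (snd p)"
  shows "\<exists>\<alpha> \<beta>. u = (\<lambda>c. \<alpha> * bas (t,1) c + \<beta> * (bas (s,0) c - bas (t,0) c)) \<and> (\<alpha> \<noteq> 0 \<longrightarrow> s = t + 1)"
proof -
  have Dp: "(if b = a + int i then qb q (i+j) i * u (a, i+j) else 0)
     = u (a,i) * bas (s,0) (b,j) + bas (t,0) (a,i) * u (b,j)" for a i b j
    using D[of "((a,i),(b,j))"] by (simp add: Delta_formula[OF u])
  have i: "u (c,m) = 0" if "2 \<le> m" for c m
  proof -
    have "qb q m 1 * u (c,m) = 0" using Dp[of "c+1" c 1 "m-1"] that by (simp add: bas_def)
    moreover have "qb q m 1 \<noteq> 0" by (rule qb_1_nz[OF qn]) (use that in simp)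
    ultimately show ?thesis by simp
  qed
  have ii: "u (c,1) = 0" if "c \<noteq> t" for c
    using Dp[of c c 0 1] that by (simp add: bas_def)
  have iii: "s = t + 1" if "u (t,1) \<noteq> 0"
    using Dp[of "t+1" t 1 0] that by (auto simp: bas_def split: if_splits)
  have iv1: "u (a,0) = 0" if "a \<noteq> s" "a \<noteq> t" for a
    using Dp[of a a 0 0] that by (simp add: bas_def)
  have iv2: "u (t,0) = - u (s,0)" if "s \<noteq> t"
    using Dp[of s t 0 0] that by (simp add: bas_def eq_neg_iff_add_eq_0 add.commute)
  have iv3: "u (s,0) = 0" if "s = t"
  proof -
    have "u (s,0) = u (s,0) * 1 + 1 * u (s,0)" using Dp[of s s 0 0] that by (simp add: bas_def)
    then have "u (s,0) + u (s,0) = u (s,0)" by simp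
    then show ?thesis by (metis add_cancel_right_right)
  qed
  define \<beta> where "\<beta> = (if s = t then 0 else u (s,0))"
  have "u = (\<lambda>c. u (t,1) * bas (t,1) c + \<beta> * (bas (s,0) c - bas (t,0) c))"
  proof (rule ext)
    fix c :: "int \<times> nat"
    obtain a m where c: "c = (a,m)" by (cases c)
    show "u c = u (t,1) * bas (t,1) c + \<beta> * (bas (s,0) c - bas (t,0) c)"
    proof (cases "m \<ge> 2")
      case True then show ?thesis using i[OF True] c by (simp add: bas_def)
    next
      case False
      then have "m = 0 \<or> m = 1" by auto
      then show ?thesis
      proof
        assume m: "m = 1"
        then show ?thesis using ii c by (cases "a = t") (auto simp: bas_def)
      next
        assume m: "m = 0"
        show ?thesis
        proof (cases "s = t")
          case True then show ?thesis using iv1 iv3 c m \<beta>_def by (cases "a = s") (auto simp: bas_def)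
        next
          case False then show ?thesis using iv1 iv2 c m \<beta>_def
            by (cases "a = s"; cases "a = t") (auto simp: bas_def)
        qed
      qed
    qed
  qed
  then show ?thesis using iii by blast
qed



definition Fv :: "int \<Rightarrow> 'k::field \<Rightarrow> 'k \<Rightarrow> 'k hel" where
  "Fv n a b = (\<lambda>c. a * bas (n,1) c + b * (bas (n+1,0) c - bas (n,0) c))"

lemma Fv_Hsp: "Fv n a b \<in> Hsp"
  unfolding Fv_def by (rule Hsp_subset[of "{(n,1),(n+1,0),(n,0)}"]) (auto simp: bas_def)

lemma bas1_Fv: "bas (n,1) = Fv n 1 0"
  by (simp add: Fv_def)

lemma Fv_eq:
  assumes "a \<noteq> 0" "Fv n a b = Fv n' a' b'"
  shows "n' = n \<and> a' = a \<and> b' = b"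
proof -
  have 1: "Fv n a b (n,1) = Fv n' a' b' (n,1)" using assms(2) by simp
  have nn: "n' = n" using 1 assms(1) by (auto simp: Fv_def bas_def split: if_splits)
  have aa: "a' = a" using 1 nn by (simp add: Fv_def bas_def)
  have "Fv n a b (n+1,0) = Fv n' a' b' (n+1,0)" using assms(2) by simp
  then have "b' = b" using nn by (simp add: Fv_def bas_def)
  then show ?thesis using nn aa by simp
qed

lemma lin3:
  assumes lin: "klinear \<phi>" and f: "f \<in> Hsp" and g: "g \<in> Hsp" and h: "h \<in> Hsp"
  shows "\<phi> (\<lambda>c. a * f c + b * (g c - h c)) = (\<lambda>c. a * \<phi> f c + b * (\<phi> g c - \<phi> h c))"
proof -
  have "\<phi> (\<lambda>c. a * f c + b * (g c - h c))
      = \<phi> (\<lambda>c. (\<lambda>c. a * f c) c + (\<lambda>c. (\<lambda>c. b * g c) c + (\<lambda>c. (-b) * h c) c) c)"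
    by (rule arg_cong[where f=\<phi>]) (simp add: fun_eq_iff algebra_simps)
  also have "\<dots> = (\<lambda>c. \<phi> (\<lambda>c. a * f c) c + \<phi> (\<lambda>c. (\<lambda>c. b * g c) c + (\<lambda>c. (-b) * h c) c) c)"
    by (rule klinear_add[OF lin Hsp_smult[OF f] Hsp_add[OF Hsp_smult[OF g] Hsp_smult[OF h]]])
  also have "\<phi> (\<lambda>c. (\<lambda>c. b * g c) c + (\<lambda>c. (-b) * h c) c) = (\<lambda>c. \<phi> (\<lambda>c. b * g c) c + \<phi> (\<lambda>c. (-b) * h c) c)"
    by (rule klinear_add[OF lin Hsp_smult[OF g] Hsp_smult[OF h]])
  also have "\<phi> (\<lambda>c. a * f c) = (\<lambda>c. a * \<phi> f c)" by (rule klinear_smult[OF lin f])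
  also have "\<phi> (\<lambda>c. b * g c) = (\<lambda>c. b * \<phi> g c)" by (rule klinear_smult[OF lin g])
  also have "\<phi> (\<lambda>c. (-b) * h c) = (\<lambda>c. (-b) * \<phi> h c)" by (rule klinear_smult[OF lin h])
  finally show ?thesis by (simp add: algebra_simps)
qed

lemma autc_bas0:
  assumes f: "\<phi> \<in> Autc q"
  shows "\<exists>a. \<phi> (bas (n,0)) = bas (a,0)"
proof (rule grouplike[of _ q])
  show "\<phi> (bas (n, 0)) \<in> Hsp" by (rule autc_Hsp[OF f bas_Hsp])
  fix p
  show "Delta q (\<phi> (bas (n, 0))) p = \<phi> (bas (n, 0)) (fst p) * \<phi> (bas (n, 0)) (snd p)"
    using autcD(3)[OF f bas_Hsp, of "(n,0)"] by (simp add: Delta_bas DB0 tmap_bas)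
  show "eps (\<phi> (bas (n, 0))) = 1" using autcD(4)[OF f bas_Hsp, of "(n,0)"] by (simp add: eps_bas)
qed

lemma autc_struct:
  fixes q :: "'k::field"
  assumes qn: "\<forall>n::nat. n > 0 \<longrightarrow> q ^ n \<noteq> 1" and f: "\<phi> \<in> Autc q"
  shows "\<exists>k \<alpha> \<beta>. (\<forall>n. \<alpha> n \<noteq> 0) \<and> (\<forall>n. \<phi> (bas (n,0)) = bas (n+k,0))
           \<and> (\<forall>n. \<phi> (bas (n,1)) = Fv (n+k) (\<alpha> n) (\<beta> n))"
proof -
  have "\<forall>n. \<exists>a. \<phi> (bas (n,0)) = bas (a,0)" using autc_bas0[OF f] by blast
  then obtain \<sigma> where \<sigma>: "\<And>n. \<phi> (bas (n,0)) = bas (\<sigma> n,0)" by metis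
  have lin: "klinear \<phi>" by (rule autcD(2)[OF f])
  have step: "\<exists>\<alpha> \<beta>. \<alpha> \<noteq> 0 \<and> \<sigma> (n+1) = \<sigma> n + 1 \<and>
      \<phi> (bas (n,1)) = (\<lambda>c. \<alpha> * bas (\<sigma> n,1) c + \<beta> * (bas (\<sigma> (n+1),0) c - bas (\<sigma> n,0) c))" for n
  proof -
    let ?u = "\<phi> (bas (n,1))"
    have uH: "?u \<in> Hsp" by (rule autc_Hsp[OF f bas_Hsp])
    have ne: "((n,1),(n+1,0)) \<noteq> ((n,0),(n,1))" by simp
    have D: "Delta q ?u p = ?u (fst p) * bas (\<sigma> (n+1),0) (snd p) + bas (\<sigma> n,0) (fst p) * ?u (snd p)" for p
    proof -
      have "Delta q ?u p = tmap \<phi> (Delta_basis q (n,1)) p"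
        using autcD(3)[OF f bas_Hsp, of "(n,1)"] by (simp add: Delta_bas)
      also have "\<dots> = (\<Sum>w\<in>{((n,1),(n+1,0)), ((n,0),(n,1))}. Delta_basis q (n,1) w * \<phi> (bas (fst w)) (fst p) * \<phi> (bas (snd w)) (snd p))"
        apply (rule tmap_super, simp)
        apply (unfold DB1)
        apply (auto simp: supp_def bas_def)
        done
      also have "\<dots> = ?u (fst p) * bas (\<sigma> (n+1),0) (snd p) + bas (\<sigma> n,0) (fst p) * ?u (snd p)"
        using ne by (simp add: DB_formula \<sigma>)
      finally show ?thesis .
    qed
    obtain \<alpha> \<beta> where ab: "?u = (\<lambda>c. \<alpha> * bas (\<sigma> n,1) c + \<beta> * (bas (\<sigma> (n+1),0) c - bas (\<sigma> n,0) c))"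
      and imp: "\<alpha> \<noteq> 0 \<longrightarrow> \<sigma> (n+1) = \<sigma> n + 1"
      using skewprim[OF qn uH D] by blast
    have "\<alpha> \<noteq> 0"
    proof
      assume a0: "\<alpha> = 0"
      have "\<phi> (\<lambda>c. 0 * bas (n,1) c + \<beta> * (bas (n+1,0) c - bas (n,0) c))
          = (\<lambda>c. 0 * ?u c + \<beta> * (bas (\<sigma> (n+1),0) c - bas (\<sigma> n,0) c))"
        by (simp only: lin3[OF lin bas_Hsp bas_Hsp bas_Hsp] \<sigma>)
      also have "\<dots> = ?u" using ab a0 by simp
      finally have "\<phi> (\<lambda>c. 0 * bas (n,1) c + \<beta> * (bas (n+1,0) c - bas (n,0) c)) = \<phi> (bas (n,1))" .
      then have eqq: "\<phi> (Fv n 0 \<beta>) = \<phi> (bas (n,1))" by (simp only: Fv_def)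
      have "bas (n,1) = Fv n 0 \<beta>"
        by (rule autc_inj[OF f bas_Hsp Fv_Hsp]) (rule sym, rule eqq)
      then have "bas (n,1::nat) (n,1) = Fv n 0 \<beta> (n,1)" by (rule fun_cong)
      then show False by (simp add: bas_def Fv_def)
    qed
    then show ?thesis using ab imp by blast
  qed
  then have "\<forall>n. \<exists>\<alpha> \<beta>. \<alpha> \<noteq> 0 \<and> \<sigma> (n+1) = \<sigma> n + 1 \<and>
      \<phi> (bas (n,1)) = (\<lambda>c. \<alpha> * bas (\<sigma> n,1) c + \<beta> * (bas (\<sigma> (n+1),0) c - bas (\<sigma> n,0) c))" by blast
  then have "\<exists>\<alpha>. \<forall>n. \<exists>\<beta>. \<alpha> n \<noteq> 0 \<and> \<sigma> (n+1) = \<sigma> n + 1 \<and>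
      \<phi> (bas (n,1)) = (\<lambda>c. \<alpha> n * bas (\<sigma> n,1) c + \<beta> * (bas (\<sigma> (n+1),0) c - bas (\<sigma> n,0) c))"
    by (rule choice)
  then obtain \<alpha> where "\<forall>n. \<exists>\<beta>. \<alpha> n \<noteq> 0 \<and> \<sigma> (n+1) = \<sigma> n + 1 \<and>
      \<phi> (bas (n,1)) = (\<lambda>c. \<alpha> n * bas (\<sigma> n,1) c + \<beta> * (bas (\<sigma> (n+1),0) c - bas (\<sigma> n,0) c))"
    by (rule exE)
  then have "\<exists>\<beta>. \<forall>n. \<alpha> n \<noteq> 0 \<and> \<sigma> (n+1) = \<sigma> n + 1 \<and>
      \<phi> (bas (n,1)) = (\<lambda>c. \<alpha> n * bas (\<sigma> n,1) c + \<beta> n * (bas (\<sigma> (n+1),0) c - bas (\<sigma> n,0) c))"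
    by (rule choice)
  then obtain \<beta> where ab0: "\<forall>n. \<alpha> n \<noteq> 0 \<and> \<sigma> (n+1) = \<sigma> n + 1 \<and>
      \<phi> (bas (n,1)) = (\<lambda>c. \<alpha> n * bas (\<sigma> n,1) c + \<beta> n * (bas (\<sigma> (n+1),0) c - bas (\<sigma> n,0) c))"
    by (rule exE)
  have ab: "\<alpha> n \<noteq> 0 \<and> \<sigma> (n+1) = \<sigma> n + 1 \<and>
      \<phi> (bas (n,1)) = (\<lambda>c. \<alpha> n * bas (\<sigma> n,1) c + \<beta> n * (bas (\<sigma> (n+1),0) c - bas (\<sigma> n,0) c))" for n
    using ab0 by blast
  have sig: "\<sigma> n = n + \<sigma> 0" for n
  proof (induction n rule: int_induct[where k=0])
    case base then show ?case by simp
  next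
    case (step1 i) then show ?case using ab[of i] by simp
  next
    case (step2 i) then show ?case using ab[of "i - 1"] by simp
  qed
  show ?thesis
  proof (intro exI conjI allI)
    fix n
    show "\<alpha> n \<noteq> 0" using ab by blast
    show "\<phi> (bas (n,0)) = bas (n + \<sigma> 0, 0)" by (simp only: \<sigma> sig[of n])
    show "\<phi> (bas (n,1)) = Fv (n + \<sigma> 0) (\<alpha> n) (\<beta> n)"
      using ab[of n] sig[of n] sig[of "n+1"] by (simp add: Fv_def add_ac)
  qed
qed



lemma AutcG_inv:
  assumes f: "\<phi> \<in> Autc q"
  shows "inv\<^bsub>AutcG q\<^esub> \<phi> \<in> Autc q" "\<And>h. h \<in> Hsp \<Longrightarrow> (inv\<^bsub>AutcG q\<^esub> \<phi>) (\<phi> h) = h"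
    "\<And>h. h \<in> Hsp \<Longrightarrow> \<phi> ((inv\<^bsub>AutcG q\<^esub> \<phi>) h) = h"
proof -
  interpret group "AutcG q" by (rule group_AutcG)
  have x: "\<phi> \<in> carrier (AutcG q)" using f by simp
  show "inv\<^bsub>AutcG q\<^esub> \<phi> \<in> Autc q" using inv_closed[OF x] by simp
  have "inv\<^bsub>AutcG q\<^esub> \<phi> \<otimes>\<^bsub>AutcG q\<^esub> \<phi> = \<one>\<^bsub>AutcG q\<^esub>" by (rule l_inv[OF x])
  then have l: "compose Hsp (inv\<^bsub>AutcG q\<^esub> \<phi>) \<phi> = restrict id Hsp" by simp
  have "\<phi> \<otimes>\<^bsub>AutcG q\<^esub> inv\<^bsub>AutcG q\<^esub> \<phi> = \<one>\<^bsub>AutcG q\<^esub>" by (rule r_inv[OF x])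
  then have r: "compose Hsp \<phi> (inv\<^bsub>AutcG q\<^esub> \<phi>) = restrict id Hsp" by simp
  fix h :: "'a hel" assume h: "h \<in> Hsp"
  show "(inv\<^bsub>AutcG q\<^esub> \<phi>) (\<phi> h) = h" using fun_cong[OF l, of h] h by (simp add: compose_eq)
  show "\<phi> ((inv\<^bsub>AutcG q\<^esub> \<phi>) h) = h" using fun_cong[OF r, of h] h by (simp add: compose_eq)
qed

lemma struct_Fv:
  assumes lin: "klinear \<phi>" and s0: "\<And>n. \<phi> (bas (n,0)) = bas (n+k,0)"
    and s1: "\<And>n. \<phi> (bas (n,1)) = Fv (n+k) (\<alpha> n) (\<beta> n)"
  shows "\<phi> (Fv n a b) = Fv (n+k) (a * \<alpha> n) (a * \<beta> n + b)"
proof -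
  have "\<phi> (Fv n a b) = (\<lambda>c. a * \<phi> (bas (n,1)) c + b * (\<phi> (bas (n+1,0)) c - \<phi> (bas (n,0)) c))"
    unfolding Fv_def by (rule lin3[OF lin bas_Hsp bas_Hsp bas_Hsp])
  also have "\<dots> = Fv (n+k) (a * \<alpha> n) (a * \<beta> n + b)"
    unfolding s0 s1 by (simp add: Fv_def fun_eq_iff algebra_simps)
  finally show ?thesis .
qed

lemma bas0_inj: "bas (a::int,0::nat) = (bas (b,0) :: 'k::field hel) \<Longrightarrow> a = b"
proof -
  assume "bas (a::int,0::nat) = (bas (b,0) :: 'k::field hel)"
  then have "(bas (a,0::nat) :: 'k hel) (a,0) = (bas (b,0) :: 'k hel) (a,0)" by (rule fun_cong)
  then show "a = b" by (simp add: bas_def split: if_splits)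
qed

lemma autstar_iff:
  fixes q :: "'k::field"
  assumes qn: "\<forall>n::nat. n > 0 \<longrightarrow> q ^ n \<noteq> 1"
  shows "\<phi> \<in> Autstar q \<longleftrightarrow> \<phi> \<in> Autc q \<and> (\<exists>\<beta>. (\<forall>n. \<phi> (bas (n,0)) = bas (n,0)) \<and> (\<forall>n. \<phi> (bas (n,1)) = Fv n 1 (\<beta> n)))"
proof
  assume st: "\<phi> \<in> Autstar q"
  then have f: "\<phi> \<in> Autc q" and z: "\<phi> (bas (0,0)) = bas (0,0)" by (auto simp: Autstar_def Aut0_def)
  obtain k \<alpha> \<beta> where a: "\<forall>n. \<alpha> n \<noteq> 0" and s0: "\<forall>n. \<phi> (bas (n,0)) = bas (n+k,0)"
    and s1: "\<forall>n. \<phi> (bas (n,1)) = Fv (n+k) (\<alpha> n) (\<beta> n)"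
    using autc_struct[OF qn f] by blast
  have "bas (0+k,0::nat) = (bas (0,0) :: 'k hel)" using z s0 by metis
  then have k: "k = 0" using bas0_inj by fastforce
  have "\<forall>n. \<exists>b. \<phi> (bas (n,1)) = Fv n 1 b"
    using st by (auto simp: Autstar_def Fv_def)
  then obtain \<gamma> where "\<forall>n. \<phi> (bas (n,1)) = Fv n 1 (\<gamma> n)" by metis
  then show "\<phi> \<in> Autc q \<and> (\<exists>\<beta>. (\<forall>n. \<phi> (bas (n,0)) = bas (n,0)) \<and> (\<forall>n. \<phi> (bas (n,1)) = Fv n 1 (\<beta> n)))"
    using f s0 k by auto
next
  assume "\<phi> \<in> Autc q \<and> (\<exists>\<beta>. (\<forall>n. \<phi> (bas (n,0)) = bas (n,0)) \<and> (\<forall>n. \<phi> (bas (n,1)) = Fv n 1 (\<beta> n)))"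
  then show "\<phi> \<in> Autstar q" by (auto simp: Autstar_def Aut0_def Fv_def)
qed



lemma Fv10: "Fv n 1 0 = bas (n, Suc 0)" by (simp add: Fv_def)

lemma star_data:
  fixes q :: "'k::field"
  assumes qn: "\<forall>n::nat. n > 0 \<longrightarrow> q ^ n \<noteq> 1" and s: "\<phi> \<in> Autstar q"
  obtains \<beta> where "\<phi> \<in> Autc q" "\<And>n. \<phi> (bas (n,0)) = bas (n,0)" "\<And>n. \<phi> (bas (n,1)) = Fv n 1 (\<beta> n)"
    "\<And>n a b. \<phi> (Fv n a b) = Fv n a (a * \<beta> n + b)"
proof -
  obtain \<beta> where f: "\<phi> \<in> Autc q" and s0: "\<And>n. \<phi> (bas (n,0)) = bas (n,0)" and s1: "\<And>n. \<phi> (bas (n,1)) = Fv n 1 (\<beta> n)"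
    using s autstar_iff[OF qn] by blast
  have "\<phi> (Fv n a b) = Fv n a (a * \<beta> n + b)" for n a b
    using struct_Fv[OF autcD(2)[OF f], of 0 "\<lambda>_. 1" \<beta> n a b] s0 s1 by simp
  then show ?thesis using that f s0 s1 by blast
qed

lemma id_star:
  fixes q :: "'k::field"
  assumes qn: "\<forall>n::nat. n > 0 \<longrightarrow> q ^ n \<noteq> 1"
  shows "restrict id Hsp \<in> Autstar q"
  unfolding autstar_iff[OF qn]
  by (rule conjI[OF one_Autc], rule exI[where x="\<lambda>_. 0"]) (simp add: bas1_Fv[symmetric])

lemma star_sub:
  fixes q :: "'k::field"
  assumes qn: "\<forall>n::nat. n > 0 \<longrightarrow> q ^ n \<noteq> 1"
  shows "subgroup (Autstar q) (AutcG q)"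
proof (rule group.subgroupI[OF group_AutcG])
  show "Autstar q \<subseteq> carrier (AutcG q)" by (auto simp: Autstar_def Aut0_def)
  show "Autstar q \<noteq> {}" using id_star[OF qn] by blast
next
  fix \<phi> assume s: "\<phi> \<in> Autstar q"
  obtain \<beta> where f: "\<phi> \<in> Autc q" and s0: "\<And>n. \<phi> (bas (n,0)) = bas (n,0)"
    and sF: "\<And>n a b. \<phi> (Fv n a b) = Fv n a (a * \<beta> n + b)"
    using star_data[OF qn s] by metis
  let ?\<psi> = "inv\<^bsub>AutcG q\<^esub> \<phi>"
  have "?\<psi> (bas (n,0)) = bas (n,0)" for n using AutcG_inv(2)[OF f bas_Hsp, of "(n,0)"] s0 by simp
  moreover have "?\<psi> (bas (n,1)) = Fv n 1 (- \<beta> n)" for n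
  proof -
    have "\<phi> (Fv n 1 (- \<beta> n)) = bas (n,1)" using sF by (simp add: Fv10)
    then show ?thesis using AutcG_inv(2)[OF f Fv_Hsp, of n 1 "- \<beta> n"] by simp
  qed
  ultimately show "?\<psi> \<in> Autstar q" unfolding autstar_iff[OF qn] using AutcG_inv(1)[OF f]
    by (intro conjI exI[of _ "\<lambda>n. - \<beta> n"]) auto
next
  fix \<phi> \<psi> assume s: "\<phi> \<in> Autstar q" and t: "\<psi> \<in> Autstar q"
  obtain \<beta> where f: "\<phi> \<in> Autc q" and s0: "\<And>n. \<phi> (bas (n,0)) = bas (n,0)"
    and sF: "\<And>n a b. \<phi> (Fv n a b) = Fv n a (a * \<beta> n + b)"
    using star_data[OF qn s] by metis
  obtain \<gamma> where g: "\<psi> \<in> Autc q" and t0: "\<And>n. \<psi> (bas (n,0)) = bas (n,0)"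
    and t1: "\<And>n. \<psi> (bas (n,1)) = Fv n 1 (\<gamma> n)"
    using star_data[OF qn t] by metis
  have "compose Hsp \<phi> \<psi> (bas (n,0)) = bas (n,0)" for n by (simp add: compose_eq s0 t0)
  moreover have "compose Hsp \<phi> \<psi> (bas (n,1)) = Fv n 1 (\<beta> n + \<gamma> n)" for n by (simp add: compose_eq t1[simplified] sF)
  ultimately show "\<phi> \<otimes>\<^bsub>AutcG q\<^esub> \<psi> \<in> Autstar q"
    unfolding autstar_iff[OF qn] using compose_Autc[OF f g] by auto
qed

lemma star_normal:
  fixes q :: "'k::field"
  assumes qn: "\<forall>n::nat. n > 0 \<longrightarrow> q ^ n \<noteq> 1"
  shows "normal (Autstar q) (AutcG q)"
  unfolding group.normal_inv_iff[OF group_AutcG]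
proof (intro conjI ballI star_sub[OF qn])
  fix x h assume x: "x \<in> carrier (AutcG q)" and h: "h \<in> Autstar q"
  have xa: "x \<in> Autc q" using x by simp
  define y where "y = inv\<^bsub>AutcG q\<^esub> x"
  have ya: "y \<in> Autc q" unfolding y_def by (rule AutcG_inv(1)[OF xa])
  have xy: "\<And>g. g \<in> Hsp \<Longrightarrow> x (y g) = g" unfolding y_def by (rule AutcG_inv(3)[OF xa])
  obtain k \<alpha> \<beta> where a: "\<forall>n. \<alpha> n \<noteq> 0" and s0: "\<forall>n. x (bas (n,0)) = bas (n+k,0)"
    and s1: "\<forall>n. x (bas (n,1)) = Fv (n+k) (\<alpha> n) (\<beta> n)"
    using autc_struct[OF qn xa] by blast
  obtain k' \<alpha>' \<beta>' where a': "\<forall>n. \<alpha>' n \<noteq> 0" and s0': "\<forall>n. y (bas (n,0)) = bas (n+k',0)"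
    and s1': "\<forall>n. y (bas (n,1)) = Fv (n+k') (\<alpha>' n) (\<beta>' n)"
    using autc_struct[OF qn ya] by blast
  obtain \<gamma> where hA: "h \<in> Autc q" and h0: "\<And>n. h (bas (n,0)) = bas (n,0)"
    and hF: "\<And>n a b. h (Fv n a b) = Fv n a (a * \<gamma> n + b)"
    using star_data[OF qn h] by metis
  have xF: "x (Fv n a b) = Fv (n+k) (a * \<alpha> n) (a * \<beta> n + b)" for n a b
    using struct_Fv[OF autcD(2)[OF xa]] s0 s1 by blast
  have kk: "k' + k = 0"
  proof -
    have "bas (0,0) = x (y (bas (0,0)))" using xy[OF bas_Hsp] by simp
    also have "\<dots> = bas (0 + k' + k, 0)" using s0 s0' by simp
    finally show ?thesis using bas0_inj by fastforce
  qed
  have aa: "\<alpha>' n * \<alpha> (n + k') = 1" for n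
  proof -
    have "Fv n 1 0 = x (y (bas (n,1)))" using xy[OF bas_Hsp] by (simp add: Fv10)
    also have "\<dots> = Fv (n + k' + k) (\<alpha>' n * \<alpha> (n+k')) (\<alpha>' n * \<beta> (n+k') + \<beta>' n)"
      using s1' xF by simp
    also have "\<dots> = Fv n (\<alpha>' n * \<alpha> (n+k')) (\<alpha>' n * \<beta> (n+k') + \<beta>' n)"
      using kk by (simp add: add.assoc)
    finally show ?thesis using Fv_eq[of 1 n 0] by auto
  qed
  have c0: "compose Hsp (compose Hsp x h) y (bas (n,0)) = bas (n,0)" for n
    using s0 s0' h0 kk by (simp add: compose_eq autc_Hsp[OF ya] add.assoc)
  have c1: "compose Hsp (compose Hsp x h) y (bas (n,1))
      = Fv n 1 (\<alpha>' n * \<beta> (n + k') + (\<alpha>' n * \<gamma> (n + k') + \<beta>' n))" for n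
  proof -
    have "compose Hsp (compose Hsp x h) y (bas (n,1)) = x (h (y (bas (n,1))))"
      by (simp add: compose_eq autc_Hsp[OF ya])
    also have "\<dots> = Fv (n + k' + k) (\<alpha>' n * \<alpha> (n+k')) (\<alpha>' n * \<beta> (n + k') + (\<alpha>' n * \<gamma> (n + k') + \<beta>' n))"
      using s1' hF xF by simp
    also have "\<dots> = Fv n 1 (\<alpha>' n * \<beta> (n + k') + (\<alpha>' n * \<gamma> (n + k') + \<beta>' n))"
      using kk aa by (simp add: add.assoc)
    finally show ?thesis .
  qed
  have "compose Hsp (compose Hsp x h) y \<in> Autc q"
    by (rule compose_Autc[OF compose_Autc[OF xa hA] ya])
  then have "compose Hsp (compose Hsp x h) y \<in> Autstar q"
    unfolding autstar_iff[OF qn] using c0 c1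
    by (intro conjI exI[of _ "\<lambda>n. \<alpha>' n * \<beta> (n + k') + (\<alpha>' n * \<gamma> (n + k') + \<beta>' n)"]) auto
  then show "x \<otimes>\<^bsub>AutcG q\<^esub> h \<otimes>\<^bsub>AutcG q\<^esub> inv\<^bsub>AutcG q\<^esub> x \<in> Autstar q"
    by (simp add: y_def)
qed



lemma Hm_iff: "h \<in> Hm m \<longleftrightarrow> h \<in> Hsp \<and> (\<forall>b. snd b \<noteq> m \<longrightarrow> h b = 0)"
  by (auto simp: Hm_def supp_def)

lemma bas_Hm: "bas (n,m) \<in> Hm m"
  by (simp add: Hm_iff) (simp add: bas_def)

lemma gr_Hm: "\<phi> \<in> Autgr q \<Longrightarrow> h \<in> Hm m \<Longrightarrow> \<phi> h \<in> Hm m"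
  unfolding Autgr_def by blast

lemma gr_bas: "\<phi> \<in> Autgr q \<Longrightarrow> snd p \<noteq> i \<Longrightarrow> \<phi> (bas (n,i)) p = 0"
proof -
  assume g: "\<phi> \<in> Autgr q" and p: "snd p \<noteq> i"
  have "\<phi> (bas (n,i)) \<in> Hm i" by (rule gr_Hm[OF g bas_Hm])
  then show ?thesis using p unfolding Hm_iff by blast
qed

lemma AutgrI: "\<phi> \<in> Autc q \<Longrightarrow> (\<And>h m. h \<in> Hm m \<Longrightarrow> \<phi> h \<in> Hm m) \<Longrightarrow> \<phi> \<in> Autgr q"
  unfolding Autgr_def by blast

lemma Autgr_Autc: "\<phi> \<in> Autgr q \<Longrightarrow> \<phi> \<in> Autc q"
  unfolding Autgr_def by blast

lemma Hm_Hsp: "h \<in> Hm m \<Longrightarrow> h \<in> Hsp"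
  unfolding Hm_def by blast

lemma gr_sub:
  fixes q :: "'k::field"
  shows "subgroup (Autgr q) (AutcG q)"
proof (rule group.subgroupI[OF group_AutcG])
  show "Autgr q \<subseteq> carrier (AutcG q)" using Autgr_Autc by auto
  have "restrict id Hsp \<in> Autgr q"
    by (rule AutgrI[OF one_Autc]) (simp add: Hm_Hsp)
  then show "Autgr q \<noteq> {}" by blast
next
  fix \<phi> \<psi> assume a: "\<phi> \<in> Autgr q" and b: "\<psi> \<in> Autgr q"
  have "compose Hsp \<phi> \<psi> \<in> Autgr q"
  proof (rule AutgrI[OF compose_Autc[OF Autgr_Autc[OF a] Autgr_Autc[OF b]]])
    fix h :: "'k hel" and m assume h: "h \<in> Hm m"
    show "compose Hsp \<phi> \<psi> h \<in> Hm m"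
      using gr_Hm[OF a gr_Hm[OF b h]] Hm_Hsp[OF h] by (simp add: compose_eq)
  qed
  then show "\<phi> \<otimes>\<^bsub>AutcG q\<^esub> \<psi> \<in> Autgr q" by simp
next
  fix \<phi> assume g: "\<phi> \<in> Autgr q"
  have f: "\<phi> \<in> Autc q" by (rule Autgr_Autc[OF g])
  have lin: "klinear \<phi>" by (rule autcD(2)[OF f])
  let ?\<psi> = "inv\<^bsub>AutcG q\<^esub> \<phi>"
  have "?\<psi> h \<in> Hm m" if h: "h \<in> Hm m" for h m
  proof -
    have hH: "h \<in> Hsp" by (rule Hm_Hsp[OF h])
    define g0 where "g0 = ?\<psi> h"
    have g0H: "g0 \<in> Hsp" unfolding g0_def by (rule autc_Hsp[OF AutcG_inv(1)[OF f] hH])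
    have pg: "\<phi> g0 = h" unfolding g0_def by (rule AutcG_inv(3)[OF f hH])
    define gm where "gm = (\<lambda>b. if snd b = m then g0 b else 0)"
    define gr where "gr = (\<lambda>b. if snd b = m then 0 else g0 b)"
    have fin: "finite (supp g0)" using g0H by (simp add: Hsp_def)
    have gmHsp: "gm \<in> Hsp"
      by (rule Hsp_subset[OF fin]) (simp add: gm_def supp_def)
    have gmH: "gm \<in> Hm m" unfolding Hm_iff using gmHsp by (simp add: gm_def)
    have grH: "gr \<in> Hsp"
      by (rule Hsp_subset[OF fin]) (simp add: gr_def supp_def)
    have gsplit: "g0 = (\<lambda>b. gm b + gr b)" by (simp add: gm_def gr_def fun_eq_iff)
    have "h = \<phi> (\<lambda>b. gm b + gr b)" using pg gsplit by simp
    also have "\<dots> = (\<lambda>b. \<phi> gm b + \<phi> gr b)" by (rule klinear_add[OF lin gmHsp grH])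
    finally have sum: "h = (\<lambda>b. \<phi> gm b + \<phi> gr b)" .
    have pgm: "\<phi> gm \<in> Hm m" by (rule gr_Hm[OF g gmH])
    have z1: "\<phi> gr p = 0" if "snd p = m" for p
    proof -
      have "\<phi> gr p = (\<Sum>b\<in>supp gr. gr b * \<phi> (bas b) p)" by (rule lin_expand_supp[OF lin grH])
      also have "\<dots> = 0"
      proof (rule sum.neutral, rule ballI)
        fix b assume b: "b \<in> supp gr"
        then have "snd b \<noteq> m" by (simp add: gr_def supp_def split: if_splits)
        then have "\<phi> (bas (fst b, snd b)) p = 0" using gr_bas[OF g, of p "snd b" "fst b"] that by simp
        then show "gr b * \<phi> (bas b) p = 0" by simp
      qed
      finally show ?thesis .
    qed
    have z2: "\<phi> gr p = 0" if "snd p \<noteq> m" for p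
    proof -
      have "h p = 0" "\<phi> gm p = 0" using that h pgm unfolding Hm_iff by blast+
      then show ?thesis using fun_cong[OF sum, of p] by simp
    qed
    have "\<phi> gr = (\<lambda>b. 0)"
    proof (rule ext)
      fix p show "\<phi> gr p = 0" using z1 z2 by (cases "snd p = m") auto
    qed
    then have "\<phi> gr = \<phi> (\<lambda>b. 0)" using klinear_zero[OF lin] by simp
    then have "gr = (\<lambda>b. 0)" by (rule autc_inj[OF f grH Hsp_zero])
    then have "g0 = gm" using gsplit by simp
    then show ?thesis using gmH g0_def by simp
  qed
  then show "?\<psi> \<in> Autgr q" by (rule AutgrI[OF AutcG_inv(1)[OF f]])
qed



lemma id_gr: "restrict id Hsp \<in> Autgr q"
  by (rule AutgrI[OF one_Autc]) (simp add: Hm_Hsp)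

lemma inter_triv:
  fixes q :: "'k::field"
  assumes qn: "\<forall>n::nat. n > 0 \<longrightarrow> q ^ n \<noteq> 1"
  shows "Autstar q \<inter> Autgr q = {restrict id Hsp}"
proof
  show "{restrict id Hsp} \<subseteq> Autstar q \<inter> Autgr q" using id_star[OF qn] id_gr by blast
  show "Autstar q \<inter> Autgr q \<subseteq> {restrict id Hsp}"
  proof
    fix \<phi> assume "\<phi> \<in> Autstar q \<inter> Autgr q"
    then have s: "\<phi> \<in> Autstar q" and g: "\<phi> \<in> Autgr q" by auto
    obtain \<beta> where f: "\<phi> \<in> Autc q" and s0: "\<And>n. \<phi> (bas (n,0)) = bas (n,0)"
      and s1: "\<And>n. \<phi> (bas (n,1)) = Fv n 1 (\<beta> n)"
      using star_data[OF qn s] by metis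
    have lin: "klinear \<phi>" by (rule autcD(2)[OF f])
    have allb: "\<phi> (bas (n,m)) = bas (n,m)" for n m
    proof (induction m arbitrary: n rule: less_induct)
      case (less m)
      show ?case
      proof (cases "m \<le> 1")
        case True
        then have "m = 0 \<or> m = 1" by auto
        then show ?thesis
        proof
          assume "m = 0" then show ?thesis using s0 by simp
        next
          assume m1: "m = 1"
          have "\<phi> (bas (n,1)) (n+1,0) = 0" by (rule gr_bas[OF g]) simp
          then have "\<beta> n = 0" using s1[of n] by (simp add: Fv_def bas_def)
          then show ?thesis using s1[of n] m1 by (simp add: Fv10)
        qed
      next
        case False
        then have m2: "2 \<le> m" by simp
        let ?u = "\<phi> (bas (n,m))"
        have uH: "?u \<in> Hsp" by (rule autc_Hsp[OF f bas_Hsp])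
        have D: "Delta q ?u = tmap \<phi> (Delta_basis q (n,m))"
          using autcD(3)[OF f bas_Hsp, of "(n,m)"] by (simp add: Delta_bas)
        have qbnz: "qb q m 1 \<noteq> 0" by (rule qb_1_nz[OF qn]) (use m2 in simp)
        have IH1: "\<phi> (bas (n,1)) = bas (n,1)" using less.IH[of 1] m2 by simp
        have IH2: "\<phi> (bas (n+1,m-1)) = bas (n+1,m-1)" using less.IH[of "m-1"] m2 by simp
        have top: "?u (a,m) = bas (n,m) (a,m)" for a
        proof -
          let ?P = "((a,1::nat),(a+1,m-1))"
          let ?ww = "((n,1::nat),(n+1,m-1))"
          have "Delta q ?u ?P = qb q m 1 * ?u (a,m)"
            using m2 by (simp add: Delta_formula[OF uH])
          moreover have "tmap \<phi> (Delta_basis q (n,m)) ?P = qb q m 1 * bas (n,m) (a,m)"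
          proof -
            have "tmap \<phi> (Delta_basis q (n,m)) ?P
              = (\<Sum>w\<in>supp (Delta_basis q (n,m)). Delta_basis q (n,m) w * \<phi> (bas (fst w)) (a,1) * \<phi> (bas (snd w)) (a+1,m-1))"
              unfolding tmap_def by simp
            also have "\<dots> = (if ?ww \<in> supp (Delta_basis q (n,m)) then
                Delta_basis q (n,m) ?ww * \<phi> (bas (fst ?ww)) (a,1) * \<phi> (bas (snd ?ww)) (a+1,m-1) else 0)"
            proof (rule sum_single_gen)
              show "finite (supp (Delta_basis q (n,m)))"
                using finite_supp_Delta[OF bas_Hsp, of q "(n,m)"] by (simp add: Delta_bas)
            next
              fix w assume w: "w \<in> supp (Delta_basis q (n,m))" and ne: "w \<noteq> ?ww"
              obtain c i d j where we: "w = ((c,i),(d,j))" by (metis prod.collapse)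
              have "Delta_basis q (n,m) w \<noteq> 0" using w by (simp add: supp_def)
              then have c: "c = n" and d: "d = n + int i" and ij: "i + j = m"
                using we by (auto simp: DB_formula split: if_splits)
              have "i \<noteq> 1" using ne we c d ij by auto
              then have "\<phi> (bas (c,i)) (a,1) = 0" by (intro gr_bas[OF g]) simp
              then show "Delta_basis q (n,m) w * \<phi> (bas (fst w)) (a,1) * \<phi> (bas (snd w)) (a+1,m-1) = 0"
                using we by simp
            qed
            also have "\<dots> = qb q m 1 * bas (n,m) (a,m)"
            proof -
              have db: "Delta_basis q (n,m) ?ww = qb q m 1" using m2 by (simp add: DB_formula)
              then have "?ww \<in> supp (Delta_basis q (n,m))" using qbnz by (simp add: supp_def)
              then show ?thesis using db IH1 IH2 m2 by (simp add: bas_def)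
            qed
            finally show ?thesis .
          qed
          ultimately have "qb q m 1 * ?u (a,m) = qb q m 1 * bas (n,m) (a,m)" using D by simp
          then show ?thesis using qbnz by simp
        qed
        show ?thesis
        proof (rule ext)
          fix p :: "int \<times> nat"
          obtain a m' where p: "p = (a,m')" by (cases p)
          show "?u p = bas (n,m) p"
          proof (cases "m' = m")
            case True then show ?thesis using top p by simp
          next
            case False
            then have "?u p = 0" using p by (intro gr_bas[OF g]) simp
            then show ?thesis using False p by (simp add: bas_def)
          qed
        qed
      qed
    qed
    have allb': "\<phi> (bas b) = bas b" for b using allb[of "fst b" "snd b"] by simp
    have "\<phi> = restrict id Hsp"
    proof (rule extensionalityI[OF autcD(5)[OF f]])
      show "restrict id Hsp \<in> extensional Hsp" by (rule restrict_extensional)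
      fix h :: "'k hel" assume h: "h \<in> Hsp"
      have fin: "finite (supp h)" using h by (simp add: Hsp_def)
      have "\<phi> h = (\<lambda>p. \<Sum>b\<in>supp h. h b * \<phi> (bas b) p)"
        using lin_expand_supp[OF lin h] by (rule ext)
      also have "\<dots> = (\<lambda>p. \<Sum>b\<in>supp h. h b * bas b p)"
        by (simp add: allb')
      also have "\<dots> = h" by (rule expand[OF fin subset_refl, symmetric])
      finally show "\<phi> h = restrict id Hsp h" using h by simp
    qed
    then show "\<phi> \<in> {restrict id Hsp}" by simp
  qed
qed



definition cc :: "(int \<Rightarrow> 'k::field) \<Rightarrow> int \<Rightarrow> nat \<Rightarrow> 'k" where
  "cc \<alpha> n m = (\<Prod>j<m. \<alpha> (n + int j))"

lemma cc_0[simp]: "cc \<alpha> n 0 = 1" by (simp add: cc_def)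
lemma cc_1: "cc \<alpha> n (Suc 0) = \<alpha> n" by (simp add: cc_def)

lemma cc_add: "cc \<alpha> n (i + j) = cc \<alpha> n i * cc \<alpha> (n + int i) j"
  by (induction j) (auto simp: cc_def add_ac)

lemma cc_nz: "(\<And>n. \<alpha> n \<noteq> 0) \<Longrightarrow> cc \<alpha> n m \<noteq> 0"
  by (simp add: cc_def)

definition Gm :: "int \<Rightarrow> (int \<Rightarrow> 'k::field) \<Rightarrow> 'k hel \<Rightarrow> 'k hel" where
  "Gm k \<alpha> = restrict (\<lambda>h p. cc \<alpha> (fst p - k) (snd p) * h (fst p - k, snd p)) Hsp"

lemma Gm_apply: "h \<in> Hsp \<Longrightarrow> Gm k \<alpha> h p = cc \<alpha> (fst p - k) (snd p) * h (fst p - k, snd p)"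
  by (simp add: Gm_def)

lemma Gm_Hsp:
  assumes h: "h \<in> Hsp"
  shows "Gm k \<alpha> h \<in> Hsp"
proof (rule Hsp_subset)
  show "finite ((\<lambda>c. (fst c + k, snd c)) ` supp h)" using h by (simp add: Hsp_def)
  fix b assume b: "b \<notin> (\<lambda>c. (fst c + k, snd c)) ` supp h"
  have "(fst b - k, snd b) \<notin> supp h"
  proof
    assume "(fst b - k, snd b) \<in> supp h"
    then have "(fst (fst b - k, snd b) + k, snd (fst b - k, snd b)) \<in> (\<lambda>c. (fst c + k, snd c)) ` supp h"
      by (rule imageI)
    then show False using b by simp
  qed
  then show "Gm k \<alpha> h b = 0" using h by (simp add: Gm_apply supp_def)
qed

lemma Gm_bas: "Gm k \<alpha> (bas (n,m)) = (\<lambda>p. cc \<alpha> n m * bas (n+k,m) p)"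
  apply (rule ext)
  apply (simp only: Gm_apply[OF bas_Hsp])
  apply (auto simp: bas_def)
  done

lemma Gm_Autc:
  fixes q :: "'k::field"
  assumes a: "\<And>n. \<alpha> n \<noteq> 0"
  shows "Gm k \<alpha> \<in> Autc q"
proof (rule autcI)
  have inj: "inj_on (Gm k \<alpha>) Hsp"
  proof (rule inj_onI)
    fix f g :: "'k hel" assume f: "f \<in> Hsp" and g: "g \<in> Hsp" and e: "Gm k \<alpha> f = Gm k \<alpha> g"
    show "f = g"
    proof (rule ext)
      fix p :: "int \<times> nat"
      have "Gm k \<alpha> f (fst p + k, snd p) = Gm k \<alpha> g (fst p + k, snd p)" using e by simp
      then show "f p = g p" using f g cc_nz[OF a] by (simp add: Gm_apply)
    qed
  qed
  have surj: "Gm k \<alpha> ` Hsp = Hsp"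
  proof
    show "Gm k \<alpha> ` Hsp \<subseteq> Hsp" using Gm_Hsp by blast
    show "Hsp \<subseteq> Gm k \<alpha> ` Hsp"
    proof
      fix h :: "'k hel" assume h: "h \<in> Hsp"
      define g where "g = (\<lambda>p. h (fst p + k, snd p) / cc \<alpha> (fst p) (snd p))"
      have gH: "g \<in> Hsp"
      proof (rule Hsp_subset)
        show "finite ((\<lambda>c. (fst c - k, snd c)) ` supp h)" using h by (simp add: Hsp_def)
        fix b assume b: "b \<notin> (\<lambda>c. (fst c - k, snd c)) ` supp h"
        have "(fst b + k, snd b) \<notin> supp h"
        proof
          assume "(fst b + k, snd b) \<in> supp h"
          then have "(fst (fst b + k, snd b) - k, snd (fst b + k, snd b)) \<in> (\<lambda>c. (fst c - k, snd c)) ` supp h"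
            by (rule imageI)
          then show False using b by simp
        qed
        then show "g b = 0" by (simp add: g_def supp_def)
      qed
      have "Gm k \<alpha> g = h"
        apply (rule ext)
        apply (simp only: Gm_apply[OF gH])
        apply (simp add: g_def cc_nz[OF a])
        done
      then show "h \<in> Gm k \<alpha> ` Hsp" using gH by blast
    qed
  qed
  show "bij_betw (Gm k \<alpha>) Hsp Hsp" using inj surj by (simp add: bij_betw_def)
  show "klinear (Gm k \<alpha>)" unfolding klinear_def
    by (auto simp: Gm_apply Hsp_add Hsp_smult fun_eq_iff algebra_simps)
  show "Gm k \<alpha> \<in> extensional Hsp" by (simp add: Gm_def)
  fix h :: "'k hel" assume h: "h \<in> Hsp"
  have GH: "Gm k \<alpha> h \<in> Hsp" by (rule Gm_Hsp[OF h])
  show "Delta q (Gm k \<alpha> h) = tmap (Gm k \<alpha>) (Delta q h)"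
  proof (rule ext)
    fix p :: "(int \<times> nat) \<times> int \<times> nat"
    obtain a i b j where p: "p = ((a,i),(b,j))" by (metis prod.collapse)
    have fin: "finite (supp (Delta q h))" by (rule finite_supp_Delta[OF h])
    have "tmap (Gm k \<alpha>) (Delta q h) ((a,i),(b,j))
        = (\<Sum>u\<in>supp (Delta q h). Delta q h u * (if u = ((a-k,i),(b-k,j)) then cc \<alpha> (a-k) i * cc \<alpha> (b-k) j else 0))"
      unfolding tmap_def
    proof (rule sum.cong[OF refl])
      fix u :: "(int \<times> nat) \<times> int \<times> nat"
      obtain c m d l where u: "u = ((c,m),(d,l))" by (metis prod.collapse)
      show "Delta q h u * Gm k \<alpha> (bas (fst u)) (fst ((a, i), b, j)) * Gm k \<alpha> (bas (snd u)) (snd ((a, i), b, j))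
        = Delta q h u * (if u = ((a-k,i),(b-k,j)) then cc \<alpha> (a-k) i * cc \<alpha> (b-k) j else 0)"
        unfolding u fst_conv snd_conv Gm_bas by (auto simp: bas_def)
    qed
    also have "\<dots> = Delta q h ((a-k,i),(b-k,j)) * (cc \<alpha> (a-k) i * cc \<alpha> (b-k) j)"
      by (rule sum_supp_single[OF fin subset_refl])
    also have "\<dots> = Delta q (Gm k \<alpha> h) ((a,i),(b,j))"
      by (auto simp: Delta_formula[OF h] Delta_formula[OF GH] Gm_apply[OF h] cc_add algebra_simps)
    finally show "Delta q (Gm k \<alpha> h) p = tmap (Gm k \<alpha>) (Delta q h) p" using p by simp
  qed
  show "eps (Gm k \<alpha> h) = eps h"
  proof -
    have fin: "finite (supp h)" using h by (simp add: Hsp_def)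
    let ?sh = "\<lambda>c::int \<times> nat. (fst c + k, snd c)"
    have sub: "supp (Gm k \<alpha> h) \<subseteq> ?sh ` supp h"
    proof
      fix b assume b: "b \<in> supp (Gm k \<alpha> h)"
      then have "(fst b - k, snd b) \<in> supp h" using h cc_nz[OF a] by (auto simp: supp_def Gm_apply)
      then have "?sh (fst b - k, snd b) \<in> ?sh ` supp h" by (rule imageI)
      then show "b \<in> ?sh ` supp h" by simp
    qed
    have injsh: "inj_on ?sh (supp h)" by (auto simp: inj_on_def prod_eq_iff)
    have "eps (Gm k \<alpha> h) = (\<Sum>b\<in>?sh ` supp h. Gm k \<alpha> h b * (if snd b = 0 then 1 else 0))"
      by (rule eps_super[OF finite_imageI[OF fin] sub])
    also have "\<dots> = (\<Sum>c\<in>supp h. Gm k \<alpha> h (?sh c) * (if snd (?sh c) = 0 then 1 else 0))"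
      by (rule sum.reindex[OF injsh, unfolded comp_def])
    also have "\<dots> = (\<Sum>c\<in>supp h. h c * (if snd c = 0 then 1 else 0))"
      by (rule sum.cong) (auto simp: Gm_apply[OF h])
    also have "\<dots> = eps h" by (simp add: eps_def)
    finally show ?thesis .
  qed
qed

lemma Gm_Autgr:
  fixes q :: "'k::field"
  assumes a: "\<And>n. \<alpha> n \<noteq> 0"
  shows "Gm k \<alpha> \<in> Autgr q"
proof (rule AutgrI[OF Gm_Autc[OF a]])
  fix h :: "'k hel" and m assume h: "h \<in> Hm m"
  have hH: "h \<in> Hsp" by (rule Hm_Hsp[OF h])
  show "Gm k \<alpha> h \<in> Hm m" unfolding Hm_iff
  proof (intro conjI allI impI Gm_Hsp[OF hH])
    fix b :: "int \<times> nat" assume "snd b \<noteq> m"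
    then have "h (fst b - k, snd b) = 0" using h unfolding Hm_iff by simp
    then show "Gm k \<alpha> h b = 0" by (simp add: Gm_apply[OF hH])
  qed
qed



lemma decomp:
  fixes q :: "'k::field"
  assumes qn: "\<forall>n::nat. n > 0 \<longrightarrow> q ^ n \<noteq> 1" and f: "\<phi> \<in> Autc q"
  shows "\<exists>\<psi>\<in>Autstar q. \<exists>g\<in>Autgr q. \<phi> = \<psi> \<otimes>\<^bsub>AutcG q\<^esub> g"
proof -
  interpret G: group "AutcG q" by (rule group_AutcG)
  obtain k \<alpha> \<beta> where a: "\<forall>n. \<alpha> n \<noteq> 0" and s0: "\<forall>n. \<phi> (bas (n,0)) = bas (n+k,0)"
    and s1: "\<forall>n. \<phi> (bas (n,1)) = Fv (n+k) (\<alpha> n) (\<beta> n)"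
    using autc_struct[OF qn f] by blast
  define \<alpha>' where "\<alpha>' = (\<lambda>n. inverse (\<alpha> (n - k)))"
  have a': "\<And>n. \<alpha>' n \<noteq> 0" using a by (simp add: \<alpha>'_def)
  define gi where "gi = Gm (-k) \<alpha>'"
  have giG: "gi \<in> Autgr q" unfolding gi_def by (rule Gm_Autgr[OF a'])
  have giC: "gi \<in> Autc q" by (rule Autgr_Autc[OF giG])
  define \<psi> where "\<psi> = compose Hsp \<phi> gi"
  have \<psi>C: "\<psi> \<in> Autc q" unfolding \<psi>_def by (rule compose_Autc[OF f giC])
  have lin: "klinear \<phi>" by (rule autcD(2)[OF f])
  have p0: "\<psi> (bas (n,0)) = bas (n,0)" for n
  proof -
    have "gi (bas (n,0)) = bas (n - k, 0)" unfolding gi_def Gm_bas by (simp add: fun_eq_iff)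
    then show ?thesis using s0 by (simp add: \<psi>_def compose_eq)
  qed
  have p1: "\<psi> (bas (n,1)) = Fv n 1 (\<alpha>' n * \<beta> (n - k))" for n
  proof -
    have "gi (bas (n,1)) = (\<lambda>p. \<alpha>' n * bas (n - k, 1) p)" unfolding gi_def Gm_bas by (simp add: cc_1)
    then have "\<psi> (bas (n,1)) = \<phi> (\<lambda>p. \<alpha>' n * bas (n - k, 1) p)" by (simp add: \<psi>_def compose_eq)
    also have "\<dots> = (\<lambda>p. \<alpha>' n * \<phi> (bas (n - k, 1)) p)" by (rule klinear_smult[OF lin bas_Hsp])
    also have "\<dots> = (\<lambda>p. \<alpha>' n * Fv n (\<alpha> (n - k)) (\<beta> (n - k)) p)" using s1 by simp
    also have "\<dots> = Fv n 1 (\<alpha>' n * \<beta> (n - k))"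
      using a by (simp add: Fv_def \<alpha>'_def fun_eq_iff algebra_simps)
    finally show ?thesis .
  qed
  have \<psi>S: "\<psi> \<in> Autstar q" unfolding autstar_iff[OF qn] using \<psi>C p0 p1
    by (intro conjI exI[of _ "\<lambda>n. \<alpha>' n * \<beta> (n - k)"]) auto
  define g where "g = inv\<^bsub>AutcG q\<^esub> gi"
  have gG: "g \<in> Autgr q" unfolding g_def using subgroup.m_inv_closed[OF gr_sub giG] by simp
  have gic: "gi \<in> carrier (AutcG q)" using giC by simp
  have fc: "\<phi> \<in> carrier (AutcG q)" using f by simp
  have "\<psi> \<otimes>\<^bsub>AutcG q\<^esub> g = (\<phi> \<otimes>\<^bsub>AutcG q\<^esub> gi) \<otimes>\<^bsub>AutcG q\<^esub> inv\<^bsub>AutcG q\<^esub> gi"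
    by (simp add: \<psi>_def g_def)
  also have "\<dots> = \<phi>"
    by (simp only: G.m_assoc[OF fc gic G.inv_closed[OF gic]] G.r_inv[OF gic] G.r_one[OF fc])
  finally show ?thesis using \<psi>S gG by metis
qed

lemma aut0_sub:
  fixes q :: "'k::field"
  shows "subgroup (Aut0 q) (AutcG q)"
proof (rule group.subgroupI[OF group_AutcG])
  show "Aut0 q \<subseteq> carrier (AutcG q)" by (auto simp: Aut0_def)
  have "restrict id Hsp \<in> Aut0 q" using one_Autc by (simp add: Aut0_def)
  then show "Aut0 q \<noteq> {}" by blast
next
  fix \<phi> \<psi> assume a: "\<phi> \<in> Aut0 q" and b: "\<psi> \<in> Aut0 q"
  then show "\<phi> \<otimes>\<^bsub>AutcG q\<^esub> \<psi> \<in> Aut0 q" by (simp add: Aut0_def compose_Autc compose_eq)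
next
  fix \<phi> assume a: "\<phi> \<in> Aut0 q"
  then have f: "\<phi> \<in> Autc q" and z: "\<phi> (bas (0,0)) = bas (0,0)" by (auto simp: Aut0_def)
  have "(inv\<^bsub>AutcG q\<^esub> \<phi>) (bas (0,0)) = bas (0,0)"
    using AutcG_inv(2)[OF f bas_Hsp, of "(0,0)"] z by simp
  then show "inv\<^bsub>AutcG q\<^esub> \<phi> \<in> Aut0 q" using AutcG_inv(1)[OF f] by (simp add: Aut0_def)
qed

lemma Aut0G_eq: "Aut0G q = (AutcG q)\<lparr>carrier := Aut0 q\<rparr>"
  by (simp add: Aut0G_def AutcG_def)

lemma star_sub0:
  fixes q :: "'k::field"
  assumes qn: "\<forall>n::nat. n > 0 \<longrightarrow> q ^ n \<noteq> 1"
  shows "Autstar q \<subseteq> Aut0 q"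
  by (auto simp: Autstar_def)

theorem lemma3p2:
  fixes q :: "'k::field"
  assumes "q \<noteq> 0" and "\<forall>n::nat. n > 0 \<longrightarrow> q ^ n \<noteq> 1"
  shows "normal (Autstar q) (AutcG q)
       \<and> subgroup (Autgr q) (AutcG q)
       \<and> Autstar q \<inter> Autgr q = {\<one>\<^bsub>AutcG q\<^esub>}
       \<and> Autstar q <#>\<^bsub>AutcG q\<^esub> Autgr q = carrier (AutcG q)
       \<and> normal (Autstar q) (Aut0G q)
       \<and> subgroup (Aut0gr q) (Aut0G q)
       \<and> Autstar q \<inter> Aut0gr q = {\<one>\<^bsub>Aut0G q\<^esub>}
       \<and> Autstar q <#>\<^bsub>Aut0G q\<^esub> Aut0gr q = carrier (Aut0G q)"
proof -
  note qn = assms(2)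
  interpret G: group "AutcG q" by (rule group_AutcG)
  have N: "normal (Autstar q) (AutcG q)" by (rule star_normal[OF qn])
  have SS: "subgroup (Autstar q) (AutcG q)" by (rule star_sub[OF qn])
  have GR: "subgroup (Autgr q) (AutcG q)" by (rule gr_sub)
  have A0: "subgroup (Aut0 q) (AutcG q)" by (rule aut0_sub)
  have I1: "Autstar q \<inter> Autgr q = {\<one>\<^bsub>AutcG q\<^esub>}" using inter_triv[OF qn] by simp
  have P1: "Autstar q <#>\<^bsub>AutcG q\<^esub> Autgr q = carrier (AutcG q)"
  proof
    show "Autstar q <#>\<^bsub>AutcG q\<^esub> Autgr q \<subseteq> carrier (AutcG q)"
      unfolding set_mult_def using subgroup.mem_carrier[OF SS] subgroup.mem_carrier[OF GR]
      by (auto intro!: compose_Autc)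
    show "carrier (AutcG q) \<subseteq> Autstar q <#>\<^bsub>AutcG q\<^esub> Autgr q"
    proof
      fix \<phi> assume "\<phi> \<in> carrier (AutcG q)"
      then have "\<phi> \<in> Autc q" by simp
      then obtain \<psi> g where "\<psi> \<in> Autstar q" "g \<in> Autgr q" "\<phi> = \<psi> \<otimes>\<^bsub>AutcG q\<^esub> g"
        using decomp[OF qn] by blast
      then show "\<phi> \<in> Autstar q <#>\<^bsub>AutcG q\<^esub> Autgr q" unfolding set_mult_def by blast
    qed
  qed
  have sub0: "Autstar q \<subseteq> Aut0 q" by (auto simp: Autstar_def)
  have grp0: "group (Aut0G q)" unfolding Aut0G_eq by (rule subgroup.subgroup_is_group[OF A0 G.is_group])
  have SS0: "subgroup (Autstar q) (Aut0G q)" unfolding Aut0G_eq by (rule G.subgroup_incl[OF SS A0 sub0])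
  have N0: "normal (Autstar q) (Aut0G q)"
    unfolding group.normal_inv_iff[OF grp0]
  proof (intro conjI ballI SS0)
    fix x h assume x: "x \<in> carrier (Aut0G q)" and h: "h \<in> Autstar q"
    have xc: "x \<in> Aut0 q" using x by (simp add: Aut0G_def)
    have "inv\<^bsub>Aut0G q\<^esub> x = inv\<^bsub>AutcG q\<^esub> x" unfolding Aut0G_eq by (rule G.m_inv_consistent[OF A0 xc])
    moreover have "x \<otimes>\<^bsub>AutcG q\<^esub> h \<otimes>\<^bsub>AutcG q\<^esub> inv\<^bsub>AutcG q\<^esub> x \<in> Autstar q"
      using N xc subgroup.mem_carrier[OF A0 xc] h unfolding G.normal_inv_iff by blast
    ultimately show "x \<otimes>\<^bsub>Aut0G q\<^esub> h \<otimes>\<^bsub>Aut0G q\<^esub> inv\<^bsub>Aut0G q\<^esub> x \<in> Autstar q"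
      by (simp add: Aut0G_def AutcG_def)
  qed
  have GR0c: "subgroup (Aut0gr q) (AutcG q)"
    unfolding Aut0gr_def by (rule G.subgroups_Inter_pair[OF GR A0])
  have GR0: "subgroup (Aut0gr q) (Aut0G q)" unfolding Aut0G_eq
    by (rule G.subgroup_incl[OF GR0c A0]) (auto simp: Aut0gr_def)
  have I0: "Autstar q \<inter> Aut0gr q = {\<one>\<^bsub>Aut0G q\<^esub>}"
  proof -
    have "Autstar q \<inter> Aut0gr q = Autstar q \<inter> Autgr q" using sub0 by (auto simp: Aut0gr_def)
    then show ?thesis using inter_triv[OF qn] by (simp add: Aut0G_def)
  qed
  have P0: "Autstar q <#>\<^bsub>Aut0G q\<^esub> Aut0gr q = carrier (Aut0G q)"
  proof
    show "Autstar q <#>\<^bsub>Aut0G q\<^esub> Aut0gr q \<subseteq> carrier (Aut0G q)"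
      unfolding set_mult_def using subgroup.mem_carrier[OF SS0] subgroup.mem_carrier[OF GR0]
      by (auto intro!: monoid.m_closed[OF group.is_monoid[OF grp0]])
    show "carrier (Aut0G q) \<subseteq> Autstar q <#>\<^bsub>Aut0G q\<^esub> Aut0gr q"
    proof
      fix \<phi> assume "\<phi> \<in> carrier (Aut0G q)"
      then have p0: "\<phi> \<in> Aut0 q" by (simp add: Aut0G_def)
      then have "\<phi> \<in> Autc q" by (simp add: Aut0_def)
      then obtain \<psi> g where ps: "\<psi> \<in> Autstar q" and gg: "g \<in> Autgr q" and e: "\<phi> = \<psi> \<otimes>\<^bsub>AutcG q\<^esub> g"
        using decomp[OF qn] by blast
      have psc: "\<psi> \<in> carrier (AutcG q)" using ps subgroup.mem_carrier[OF SS] by blast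
      have gc: "g \<in> carrier (AutcG q)" using gg subgroup.mem_carrier[OF GR] by blast
      have "inv\<^bsub>AutcG q\<^esub> \<psi> \<otimes>\<^bsub>AutcG q\<^esub> \<phi> = g"
        unfolding e
        by (simp only: G.m_assoc[OF G.inv_closed[OF psc] psc gc, symmetric] G.l_inv[OF psc] G.l_one[OF gc])
      then have "g = inv\<^bsub>AutcG q\<^esub> \<psi> \<otimes>\<^bsub>AutcG q\<^esub> \<phi>" by simp
      moreover have "inv\<^bsub>AutcG q\<^esub> \<psi> \<otimes>\<^bsub>AutcG q\<^esub> \<phi> \<in> Aut0 q"
        using subgroup.m_closed[OF A0 subgroup.m_inv_closed[OF A0] p0] ps sub0 by blast
      ultimately have "g \<in> Aut0gr q" using gg by (simp add: Aut0gr_def)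
      moreover have "\<phi> = \<psi> \<otimes>\<^bsub>Aut0G q\<^esub> g" using e by (simp add: Aut0G_def AutcG_def)
      ultimately show "\<phi> \<in> Autstar q <#>\<^bsub>Aut0G q\<^esub> Aut0gr q" using ps unfolding set_mult_def by blast
    qed
  qed
  show ?thesis using N GR I1 P1 N0 GR0 I0 P0 by blast
qed

end
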